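(* Let $\mathfrak{X}=(X,\{R_0,R_1,R_2,R_3,R_4\})$ be a $4$-class association scheme with $R_1^\top=R_1$, $R_2^\top=R_2$ and $R_3^\top=R_4$. Let $\tilde R_3=R_3\cup R_4$ and $\Gamma^{(3)}=(X,\tilde R_3)$. Suppose that $\Gamma^{(3)}$ is the disjoint union of $N>1$ connected strongly regular graphs, each with valency $k$, eigenvalues $k,r,s$ with $r\neq k$, $s\neq k$, and $w$ vertices. Then the digraph $(X,R_i\cup R_3)$ has $5$ distinct eigenvalues for some $i\in\{1,2,3\}$.
   Context: An association scheme on a finite set $X$ is a partition of $X\times X$ into relations $R_0$ (diagonal), $R_1,\dots,R_d$ closed under transposition, with constant intersection numbers $p^l_{i,j}$. A strongly regular graph is a regular graph, neither complete nor edgeless, in which any two adjacent vertices have a constant number $\lambda$ of common neighbours and any two distinct nonadjacent vertices a constant number $\mu$. Eigenvalues of a (di)graph $(X,R)$ are those of its $01$ adjacency matrix. *)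

theory Defs
  imports Complex_Main
begin

definition assoc_scheme :: "'a set \<Rightarrow> nat \<Rightarrow> (nat \<Rightarrow> ('a \<times> 'a) set) \<Rightarrow> bool" where
  "assoc_scheme X d R \<longleftrightarrow>
     finite X \<and>
     (\<forall>i\<le>d. R i \<noteq> {} \<and> R i \<subseteq> X \<times> X) \<and>
     (\<Union>i\<in>{..d}. R i) = X \<times> X \<and>
     (\<forall>i\<le>d. \<forall>j\<le>d. i \<noteq> j \<longrightarrow> R i \<inter> R j = {}) \<and>
     R 0 = Id_on X \<and>
     (\<forall>i\<le>d. \<exists>j\<le>d. (R i)\<inverse> = R j) \<and>
     (\<forall>i\<le>d. \<forall>j\<le>d. \<forall>l\<le>d. \<exists>p::nat. \<forall>(x, y)\<in>R l.
        card {z\<in>X. (x, z) \<in> R i \<and> (z, y) \<in> R j} = p)"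

definition adj_eigenvalues :: "'a set \<Rightarrow> ('a \<times> 'a) set \<Rightarrow> complex set" where
  "adj_eigenvalues V E = {\<mu>. \<exists>v :: 'a \<Rightarrow> complex. (\<exists>x\<in>V. v x \<noteq> 0) \<and>
      (\<forall>x\<in>V. (\<Sum>y\<in>V. if (x, y) \<in> E then v y else 0) = \<mu> * v x)}"

definition srg_valency :: "'a set \<Rightarrow> ('a \<times> 'a) set \<Rightarrow> nat \<Rightarrow> bool" where
  "srg_valency V E k \<longleftrightarrow>
     finite V \<and> E \<subseteq> V \<times> V \<and> sym E \<and> irrefl E \<and>
     (\<forall>x\<in>V. card {y\<in>V. (x, y) \<in> E} = k) \<and>
     (\<exists>x\<in>V. \<exists>y\<in>V. x \<noteq> y \<and> (x, y) \<notin> E) \<and>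
     E \<noteq> {} \<and>
     (\<exists>lam mu :: nat.
        (\<forall>x\<in>V. \<forall>y\<in>V. (x, y) \<in> E \<longrightarrow> card {z\<in>V. (x, z) \<in> E \<and> (y, z) \<in> E} = lam) \<and>
        (\<forall>x\<in>V. \<forall>y\<in>V. x \<noteq> y \<and> (x, y) \<notin> E \<longrightarrow> card {z\<in>V. (x, z) \<in> E \<and> (y, z) \<in> E} = mu))"

definition graph_connected :: "'a set \<Rightarrow> ('a \<times> 'a) set \<Rightarrow> bool" where
  "graph_connected V E \<longleftrightarrow> (\<forall>x\<in>V. \<forall>y\<in>V. (x, y) \<in> (E \<inter> V \<times> V)\<^sup>*)"

definition disjoint_union_of :: "'a set \<Rightarrow> ('a \<times> 'a) set \<Rightarrow> 'a set set \<Rightarrow> bool" where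
  "disjoint_union_of X E Cs \<longleftrightarrow>
     \<Union>Cs = X \<and> (\<forall>C\<in>Cs. C \<noteq> {}) \<and>
     (\<forall>C\<in>Cs. \<forall>D\<in>Cs. C \<noteq> D \<longrightarrow> C \<inter> D = {}) \<and>
     E = (\<Union>C\<in>Cs. E \<inter> C \<times> C)"

end

theory Submission
  imports Defs
begin
locale pf =
  fixes X :: "'a set" and R :: "nat \<Rightarrow> ('a \<times> 'a) set" and P :: "nat \<Rightarrow> nat \<Rightarrow> nat \<Rightarrow> nat"
    and Cs :: "'a set set" and i j w :: nat
  assumes finX: "finite X"
  and Rne: "\<And>l. l \<le> 4 \<Longrightarrow> R l \<noteq> {}"
  and Rsub: "\<And>l. l \<le> 4 \<Longrightarrow> R l \<subseteq> X \<times> X"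
  and cover: "\<And>x y. x \<in> X \<Longrightarrow> y \<in> X \<Longrightarrow> \<exists>l\<le>4. (x,y) \<in> R l"
  and disj: "\<And>l m x y. l \<le> 4 \<Longrightarrow> m \<le> 4 \<Longrightarrow> (x,y) \<in> R l \<Longrightarrow> (x,y) \<in> R m \<Longrightarrow> l = m"
  and R0: "R 0 = Id_on X"
  and sym1: "(R 1)\<inverse> = R 1" and sym2: "(R 2)\<inverse> = R 2" and tr34: "(R 3)\<inverse> = R 4"
  and Pdef: "\<And>a b l x y. a \<le> 4 \<Longrightarrow> b \<le> 4 \<Longrightarrow> l \<le> 4 \<Longrightarrow> (x,y) \<in> R l \<Longrightarrow>
       card {z\<in>X. (x,z) \<in> R a \<and> (z,y) \<in> R b} = P a b l"
  and ij: "i \<in> {1,2}" "j \<in> {1,2}" "i \<noteq> j"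
  and Ri: "\<And>x y. (x,y) \<in> R i \<longleftrightarrow> x \<in> X \<and> y \<in> X \<and> \<not>(\<exists>C\<in>Cs. x \<in> C \<and> y \<in> C)"
  and R3C: "\<And>x y. (x,y) \<in> R 3 \<Longrightarrow> \<exists>C\<in>Cs. x \<in> C \<and> y \<in> C"
  and CsU: "\<Union>Cs = X" and Csne: "\<And>C. C \<in> Cs \<Longrightarrow> C \<noteq> {}"
  and Csdisj: "\<And>C D. C\<in>Cs \<Longrightarrow> D\<in>Cs \<Longrightarrow> C \<noteq> D \<Longrightarrow> C \<inter> D = {}"
  and Cscard: "\<And>C. C \<in> Cs \<Longrightarrow> card C = w"
  and Cs2: "2 \<le> card Cs"
  and NS: "\<exists>x y z. (\<exists>C\<in>Cs. x\<in>C \<and> y\<in>C \<and> z\<in>C) \<and> x \<noteq> y \<and> (x,y) \<notin> R 3 \<union> R 4 \<and> (x,z) \<in> R 3 \<union> R 4"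
begin

definition adj :: "nat \<Rightarrow> 'a \<Rightarrow> 'a \<Rightarrow> complex" where
  "adj l x y = (if (x,y) \<in> R l then 1 else 0)"

definition nv :: "nat \<Rightarrow> ('a \<Rightarrow> complex) \<Rightarrow> 'a \<Rightarrow> complex" where
  "nv l v x = (\<Sum>y\<in>X. adj l x y * v y)"

definition tp :: "nat \<Rightarrow> nat" where
  "tp l = (if l = 3 then 4 else if l = 4 then 3 else l)"

lemma tp_le: "l \<le> 4 \<Longrightarrow> tp l \<le> 4" by (auto simp: tp_def)

lemma ij12: "(i = 1 \<and> j = 2) \<or> (i = 2 \<and> j = 1)" using ij by auto

lemma R_tp: "l \<le> 4 \<Longrightarrow> (x,y) \<in> R (tp l) \<longleftrightarrow> (y,x) \<in> R l"
proof -
  assume l: "l \<le> 4"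
  have "l = 0 \<or> l = 1 \<or> l = 2 \<or> l = 3 \<or> l = 4" using l by auto
  then show ?thesis
  proof (elim disjE)
    assume "l = 0" then show ?thesis by (auto simp: tp_def R0)
  next
    assume "l = 1" then show ?thesis using sym1 by (auto simp: tp_def)
  next
    assume "l = 2" then show ?thesis using sym2 by (auto simp: tp_def)
  next
    assume "l = 3" then show ?thesis using tr34 by (auto simp: tp_def)
  next
    assume "l = 4" then show ?thesis using tr34 by (auto simp: tp_def)
  qed
qed

lemma Rsub': "l \<le> 4 \<Longrightarrow> (x,y) \<in> R l \<Longrightarrow> x \<in> X \<and> y \<in> X"
  using Rsub by blast

lemma finCs: "finite Cs"
  using finX CsU by (metis finite_UnionD)

lemma finC: "C \<in> Cs \<Longrightarrow> finite C"
  using finX CsU by (metis Sup_upper finite_subset)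

lemma CX: "C \<in> Cs \<Longrightarrow> C \<subseteq> X" using CsU by blast

lemma comp_ex: "x \<in> X \<Longrightarrow> \<exists>C\<in>Cs. x \<in> C" using CsU by blast

lemma comp_uniq: "C \<in> Cs \<Longrightarrow> D \<in> Cs \<Longrightarrow> x \<in> C \<Longrightarrow> x \<in> D \<Longrightarrow> C = D"
  using Csdisj by blast

lemma sameC_iff: "C \<in> Cs \<Longrightarrow> x \<in> C \<Longrightarrow> (\<exists>D\<in>Cs. x \<in> D \<and> y \<in> D) \<longleftrightarrow> y \<in> C"
  using comp_uniq by blast

lemma R3C': "C \<in> Cs \<Longrightarrow> x \<in> C \<Longrightarrow> (x,y) \<in> R 3 \<Longrightarrow> y \<in> C"
  using R3C sameC_iff by blast

lemma R3C'': "C \<in> Cs \<Longrightarrow> y \<in> C \<Longrightarrow> (x,y) \<in> R 3 \<Longrightarrow> x \<in> C"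
  using R3C comp_uniq by blast

lemma R4C': "C \<in> Cs \<Longrightarrow> x \<in> C \<Longrightarrow> (x,y) \<in> R 4 \<Longrightarrow> y \<in> C"
  using R3C'' tr34 by blast

lemma R4C'': "C \<in> Cs \<Longrightarrow> y \<in> C \<Longrightarrow> (x,y) \<in> R 4 \<Longrightarrow> x \<in> C"
  using R3C' tr34 by blast

lemma cls: "x \<in> X \<Longrightarrow> y \<in> X \<Longrightarrow> \<exists>l\<le>4. (x,y) \<in> R l \<and> (\<forall>m\<le>4. (x,y) \<in> R m \<longleftrightarrow> m = l)"
  using cover disj by metis

lemma sum_adj:
  assumes "l \<le> 4" "(x,y) \<in> R l"
  shows "(\<Sum>m\<le>4. f m * adj m x y) = f l"
proof -
  have "(\<Sum>m\<le>4. f m * adj m x y) = (\<Sum>m\<le>4. if m = l then f m else 0)"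
    by (rule sum.cong) (use assms disj in \<open>auto simp: adj_def\<close>)
  also have "\<dots> = f l" using assms(1) by simp
  finally show ?thesis .
qed

lemma sum_ind: "finite A \<Longrightarrow> (\<Sum>z\<in>A. (if Q z then 1 else 0::complex)) = of_nat (card {z\<in>A. Q z})"
  by (simp add: sum.If_cases Int_def)

lemma Pprod:
  assumes a: "a \<le> 4" and b: "b \<le> 4" and x: "x \<in> X"
  shows "nv a (nv b v) x = (\<Sum>l\<le>4. of_nat (P a b l) * nv l v x)"
proof -
  have inner: "(\<Sum>z\<in>X. adj a x z * adj b z y) = (\<Sum>l\<le>4. of_nat (P a b l) * adj l x y)"
    if y: "y \<in> X" for y
  proof -
    obtain l where l: "l \<le> 4" "(x,y) \<in> R l" using cls[OF x y] by blast
    have "(\<Sum>z\<in>X. adj a x z * adj b z y) = (\<Sum>z\<in>X. if (x,z) \<in> R a \<and> (z,y) \<in> R b then 1 else 0)"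
      by (rule sum.cong) (auto simp: adj_def)
    also have "\<dots> = of_nat (card {z\<in>X. (x,z) \<in> R a \<and> (z,y) \<in> R b})"
      using finX by (rule sum_ind)
    also have "\<dots> = of_nat (P a b l)" using Pdef[OF a b l] by simp
    also have "\<dots> = (\<Sum>l\<le>4. of_nat (P a b l) * adj l x y)" using sum_adj[OF l] by simp
    finally show ?thesis .
  qed
  have "nv a (nv b v) x = (\<Sum>z\<in>X. \<Sum>y\<in>X. adj a x z * adj b z y * v y)"
    by (simp add: nv_def sum_distrib_left mult.assoc)
  also have "\<dots> = (\<Sum>y\<in>X. \<Sum>z\<in>X. adj a x z * adj b z y * v y)"
    by (rule sum.swap)
  also have "\<dots> = (\<Sum>y\<in>X. (\<Sum>z\<in>X. adj a x z * adj b z y) * v y)"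
    by (simp add: sum_distrib_right)
  also have "\<dots> = (\<Sum>y\<in>X. (\<Sum>l\<le>4. of_nat (P a b l) * adj l x y) * v y)"
    using inner by simp
  also have "\<dots> = (\<Sum>y\<in>X. \<Sum>l\<le>4. of_nat (P a b l) * adj l x y * v y)"
    by (simp add: sum_distrib_right)
  also have "\<dots> = (\<Sum>l\<le>4. \<Sum>y\<in>X. of_nat (P a b l) * adj l x y * v y)"
    by (rule sum.swap)
  also have "\<dots> = (\<Sum>l\<le>4. of_nat (P a b l) * nv l v x)"
    by (simp add: nv_def sum_distrib_left mult.assoc)
  finally show ?thesis .
qed

lemma P_tp:
  assumes a: "a \<le> 4" and b: "b \<le> 4" and l: "l \<le> 4"
  shows "P (tp b) (tp a) (tp l) = P a b l"
proof -
  obtain x y where xy: "(x,y) \<in> R l" using Rne[OF l] by auto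
  have yx: "(y,x) \<in> R (tp l)" using R_tp[OF l] xy by simp
  have "P (tp b) (tp a) (tp l) = card {z\<in>X. (y,z) \<in> R (tp b) \<and> (z,x) \<in> R (tp a)}"
    using Pdef[OF tp_le[OF b] tp_le[OF a] tp_le[OF l] yx] by simp
  also have "{z\<in>X. (y,z) \<in> R (tp b) \<and> (z,x) \<in> R (tp a)} = {z\<in>X. (x,z) \<in> R a \<and> (z,y) \<in> R b}"
    using R_tp[OF a] R_tp[OF b] by auto
  also have "card \<dots> = P a b l" using Pdef[OF a b l xy] .
  finally show ?thesis .
qed

end

context pf begin

lemma sum5: "(\<Sum>l\<le>(4::nat). f l) = f 0 + f 1 + f 2 + f 3 + (f 4::complex)"
  by (simp add: eval_nat_numeral atMost_Suc add.assoc add.commute add.left_commute)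

lemma R43: "(x,y) \<in> R 4 \<longleftrightarrow> (y,x) \<in> R 3" using tr34 by auto

lemma Xne: "X \<noteq> {}" using Rne[of 0] R0 by auto

lemma Pent: "a \<le> 4 \<Longrightarrow> b \<le> 4 \<Longrightarrow> l \<le> 4 \<Longrightarrow> (x,y) \<in> R l \<Longrightarrow>
   (\<Sum>z\<in>X. adj a x z * adj b z y) = of_nat (P a b l)"
proof -
  assume a: "a \<le> 4" and b: "b \<le> 4" and l: "l \<le> 4" and xy: "(x,y) \<in> R l"
  have "(\<Sum>z\<in>X. adj a x z * adj b z y) = (\<Sum>z\<in>X. if (x,z) \<in> R a \<and> (z,y) \<in> R b then 1 else 0)"
    by (rule sum.cong) (auto simp: adj_def)
  also have "\<dots> = of_nat (card {z\<in>X. (x,z) \<in> R a \<and> (z,y) \<in> R b})"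
    using finX by (rule sum_ind)
  also have "\<dots> = of_nat (P a b l)" using Pdef[OF a b l xy] by simp
  finally show ?thesis .
qed

lemma rowsum: "(\<Sum>y\<in>X. adj l x y) = of_nat (card {y\<in>X. (x,y) \<in> R l})"
  unfolding adj_def using finX by (rule sum_ind)

abbreviation K where "K \<equiv> P 3 4 0"

lemma deg3: "x \<in> X \<Longrightarrow> card {y\<in>X. (x,y) \<in> R 3} = K"
proof -
  assume x: "x \<in> X"
  have "(x,x) \<in> R 0" using x R0 by auto
  from Pdef[OF _ _ _ this, of 3 4] have "card {z\<in>X. (x,z) \<in> R 3 \<and> (z,x) \<in> R 4} = K" by simp
  moreover have "{z\<in>X. (x,z) \<in> R 3 \<and> (z,x) \<in> R 4} = {y\<in>X. (x,y) \<in> R 3}" using tr34 by auto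
  ultimately show ?thesis by simp
qed

lemma deg4': "x \<in> X \<Longrightarrow> card {y\<in>X. (x,y) \<in> R 4} = P 4 3 0"
proof -
  assume x: "x \<in> X"
  have "(x,x) \<in> R 0" using x R0 by auto
  from Pdef[OF _ _ _ this, of 4 3] have "card {z\<in>X. (x,z) \<in> R 4 \<and> (z,x) \<in> R 3} = P 4 3 0" by simp
  moreover have "{z\<in>X. (x,z) \<in> R 4 \<and> (z,x) \<in> R 3} = {y\<in>X. (x,y) \<in> R 4}" using tr34 by auto
  ultimately show ?thesis by simp
qed

lemma K4: "P 4 3 0 = K"
proof -
  have "(\<Sum>x\<in>X. \<Sum>y\<in>X. adj 3 x y) = (\<Sum>y\<in>X. \<Sum>x\<in>X. adj 3 x y)" by (rule sum.swap)
  moreover have "(\<Sum>x\<in>X. \<Sum>y\<in>X. adj 3 x y) = of_nat (card X) * of_nat K"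
    using rowsum deg3 by simp
  moreover have "(\<Sum>y\<in>X. \<Sum>x\<in>X. adj 3 x y) = (\<Sum>y\<in>X. \<Sum>x\<in>X. adj 4 y x)"
    using R43 by (auto simp: adj_def intro!: sum.cong)
  moreover have "(\<Sum>y\<in>X. \<Sum>x\<in>X. adj 4 y x) = of_nat (card X) * of_nat (P 4 3 0)"
    using rowsum deg4' by simp
  ultimately have "of_nat (card X) * (of_nat K :: complex) = of_nat (card X) * of_nat (P 4 3 0)" by simp
  moreover have "card X \<noteq> 0" using finX Xne by simp
  ultimately show ?thesis by (simp del: of_nat_mult)
qed

lemma deg4: "x \<in> X \<Longrightarrow> card {y\<in>X. (x,y) \<in> R 4} = K"
  using deg4' K4 by simp

lemma row3: "x \<in> X \<Longrightarrow> (\<Sum>y\<in>X. adj 3 x y) = of_nat K" using rowsum deg3 by simp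
lemma row4: "x \<in> X \<Longrightarrow> (\<Sum>y\<in>X. adj 4 x y) = of_nat K" using rowsum deg4 by simp

lemma col3C: assumes C: "C \<in> Cs" and y: "y \<in> X"
  shows "(\<Sum>x\<in>C. adj 3 x y) = (if y \<in> C then of_nat K else 0)"
proof -
  have "(\<Sum>x\<in>C. adj 3 x y) = of_nat (card {x\<in>C. (x,y) \<in> R 3})"
    unfolding adj_def using finC[OF C] by (rule sum_ind)
  moreover have "{x\<in>C. (x,y) \<in> R 3} = (if y \<in> C then {x\<in>X. (y,x) \<in> R 4} else {})"
  proof (cases "y \<in> C")
    case True
    have "{x\<in>C. (x,y) \<in> R 3} = {x\<in>X. (y,x) \<in> R 4}"
    proof (intro equalityI subsetI)
      fix x assume "x \<in> {x\<in>C. (x,y) \<in> R 3}"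
      then show "x \<in> {x\<in>X. (y,x) \<in> R 4}" using CX[OF C] R43 by blast
    next
      fix x assume "x \<in> {x\<in>X. (y,x) \<in> R 4}"
      then have "(x,y) \<in> R 3" using R43 by blast
      then show "x \<in> {x\<in>C. (x,y) \<in> R 3}" using R3C''[OF C True] by blast
    qed
    then show ?thesis using True by simp
  next
    case False
    have "{x\<in>C. (x,y) \<in> R 3} = {}" using R3C'[OF C] False by blast
    then show ?thesis using False by simp
  qed
  ultimately show ?thesis using deg4[OF y] by simp
qed

lemma P00: "P 3 3 0 = 0" "P 4 4 0 = 0"
proof -
  obtain x where x: "x \<in> X" using Xne by auto
  have xx: "(x,x) \<in> R 0" using x R0 by auto
  have e1: "{z\<in>X. (x,z) \<in> R 3 \<and> (z,x) \<in> R 3} = {}"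
    using R43 disj[of 3 4] by auto
  have c1: "card {z\<in>X. (x,z) \<in> R 3 \<and> (z,x) \<in> R 3} = P 3 3 0" by (rule Pdef[OF _ _ _ xx]) auto
  show "P 3 3 0 = 0" using c1 unfolding e1 by simp
  have e2: "{z\<in>X. (x,z) \<in> R 4 \<and> (z,x) \<in> R 4} = {}"
    using R43 disj[of 3 4] by auto
  have c2: "card {z\<in>X. (x,z) \<in> R 4 \<and> (z,x) \<in> R 4} = P 4 4 0" by (rule Pdef[OF _ _ _ xx]) auto
  show "P 4 4 0 = 0" using c2 unfolding e2 by simp
qed

lemma i_le: "i \<le> 4" and j_le: "j \<le> 4" using ij by auto

lemma R34C: "a \<in> {3,4} \<Longrightarrow> (x,y) \<in> R a \<Longrightarrow> \<exists>C\<in>Cs. x \<in> C \<and> y \<in> C"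
proof -
  assume "a \<in> {3,4}" "(x,y) \<in> R a"
  then have "(x,y) \<in> R 3 \<or> (y,x) \<in> R 3" using R43 by auto
  then show ?thesis using R3C by blast
qed

lemma Pi0: assumes "a \<in> {3,4}" "b \<in> {3,4}" shows "P a b i = 0"
proof -
  obtain x y where xy: "(x,y) \<in> R i" using Rne[OF i_le] by auto
  have e: "{z\<in>X. (x,z) \<in> R a \<and> (z,y) \<in> R b} = {}"
  proof (rule ccontr)
    assume "{z\<in>X. (x,z) \<in> R a \<and> (z,y) \<in> R b} \<noteq> {}"
    then obtain z where z: "(x,z) \<in> R a" "(z,y) \<in> R b" by auto
    obtain C where C: "C \<in> Cs" "x \<in> C" "z \<in> C" using R34C[OF assms(1) z(1)] by auto
    obtain D where D: "D \<in> Cs" "z \<in> D" "y \<in> D" using R34C[OF assms(2) z(2)] by auto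
    have "C = D" using comp_uniq C D by auto
    then show False using xy Ri C D by auto
  qed
  have c: "card {z\<in>X. (x,z) \<in> R a \<and> (z,y) \<in> R b} = P a b i"
    by (rule Pdef[OF _ _ i_le xy]) (use assms in auto)
  show ?thesis using c unfolding e by simp
qed

lemma trace_eq: "(\<Sum>x\<in>X. \<Sum>y\<in>X. \<Sum>z\<in>X. adj 4 x y * (adj 3 x z * adj 4 z y)) =
                 (\<Sum>x\<in>X. \<Sum>y\<in>X. \<Sum>z\<in>X. adj 4 x y * (adj 4 x z * adj 3 z y))"
proof -
  define f where "f a b c = adj 3 b a * adj 3 a c * adj 3 b c" for a b c
  have a4: "adj 4 u v = adj 3 v u" for u v using tr34 by (auto simp: adj_def)
  have "(\<Sum>x\<in>X. \<Sum>y\<in>X. \<Sum>z\<in>X. adj 4 x y * (adj 4 x z * adj 3 z y)) =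
        (\<Sum>x\<in>X. \<Sum>y\<in>X. \<Sum>z\<in>X. f y z x)"
    by (simp add: a4 f_def mult_ac)
  also have "\<dots> = (\<Sum>y\<in>X. \<Sum>x\<in>X. \<Sum>z\<in>X. f y z x)" by (rule sum.swap)
  also have "\<dots> = (\<Sum>y\<in>X. \<Sum>z\<in>X. \<Sum>x\<in>X. f y z x)" by (rule sum.cong[OF refl], rule sum.swap)
  also have "\<dots> = (\<Sum>x\<in>X. \<Sum>y\<in>X. \<Sum>z\<in>X. adj 4 x y * (adj 3 x z * adj 4 z y))"
    by (simp add: a4 f_def mult_ac)
  finally show ?thesis by simp
qed

lemma cnt4: "(\<Sum>x\<in>X. \<Sum>y\<in>X. adj 4 x y) \<noteq> 0"
proof -
  have "(\<Sum>x\<in>X. \<Sum>y\<in>X. adj 4 x y) = of_nat (card X * K)" using row4 by simp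
  moreover have "K \<noteq> 0"
  proof
    assume "K = 0"
    obtain x y where "(x,y) \<in> R 4" using Rne[of 4] by auto
    then have "x \<in> X" "y \<in> {y\<in>X. (x,y) \<in> R 4}" using Rsub'[of 4] by auto
    moreover have "finite {y\<in>X. (x,y) \<in> R 4}" using finX by simp
    ultimately have "card {y\<in>X. (x,y) \<in> R 4} \<noteq> 0" by (metis card_0_eq empty_iff)
    then show False using deg4[OF \<open>x \<in> X\<close>] \<open>K = 0\<close> by simp
  qed
  ultimately show ?thesis using finX Xne by simp
qed

lemma tr_side: "a \<le> 4 \<Longrightarrow> b \<le> 4 \<Longrightarrow> (\<Sum>x\<in>X. \<Sum>y\<in>X. \<Sum>z\<in>X. adj 4 x y * (adj a x z * adj b z y)) =
     of_nat (P a b 4) * (\<Sum>x\<in>X. \<Sum>y\<in>X. adj 4 x y)"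
proof -
  assume a: "a \<le> 4" and b: "b \<le> 4"
  have "(\<Sum>x\<in>X. \<Sum>y\<in>X. \<Sum>z\<in>X. adj 4 x y * (adj a x z * adj b z y)) =
        (\<Sum>x\<in>X. \<Sum>y\<in>X. adj 4 x y * (\<Sum>z\<in>X. adj a x z * adj b z y))"
    by (simp add: sum_distrib_left)
  also have "\<dots> = (\<Sum>x\<in>X. \<Sum>y\<in>X. of_nat (P a b 4) * adj 4 x y)"
  proof (intro sum.cong refl)
    fix x y assume "x \<in> X" "y \<in> X"
    show "adj 4 x y * (\<Sum>z\<in>X. adj a x z * adj b z y) = of_nat (P a b 4) * adj 4 x y"
      using Pent[OF a b order_refl, of x y] by (cases "(x,y) \<in> R 4") (simp_all add: adj_def[of 4])
  qed
  also have "\<dots> = of_nat (P a b 4) * (\<Sum>x\<in>X. \<Sum>y\<in>X. adj 4 x y)"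
    by (simp add: sum_distrib_left)
  finally show ?thesis .
qed

lemma comm34: "P 3 4 4 = P 4 3 4"
proof -
  have e1: "(\<Sum>x\<in>X. \<Sum>y\<in>X. \<Sum>z\<in>X. adj 4 x y * (adj 3 x z * adj 4 z y)) =
     of_nat (P 3 4 4) * (\<Sum>x\<in>X. \<Sum>y\<in>X. adj 4 x y)" by (rule tr_side) simp_all
  have e2: "(\<Sum>x\<in>X. \<Sum>y\<in>X. \<Sum>z\<in>X. adj 4 x y * (adj 4 x z * adj 3 z y)) =
     of_nat (P 4 3 4) * (\<Sum>x\<in>X. \<Sum>y\<in>X. adj 4 x y)" by (rule tr_side) simp_all
  have "of_nat (P 3 4 4) * (\<Sum>x\<in>X. \<Sum>y\<in>X. adj 4 x y) = of_nat (P 4 3 4) * (\<Sum>x\<in>X. \<Sum>y\<in>X. adj 4 x y)"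
    by (rule box_equals[OF trace_eq e1 e2])
  then show ?thesis using cnt4 by simp
qed

lemma P343: "P 3 4 3 = P 3 4 4" using P_tp[of 3 4 3] by (simp add: tp_def)
lemma P433: "P 4 3 3 = P 4 3 4" using P_tp[of 4 3 3] by (simp add: tp_def)

lemma commj: "P 3 4 j = P 4 3 j"
proof -
  obtain x y0 where xy0: "(x,y0) \<in> R j" using Rne[OF j_le] by auto
  have x: "x \<in> X" using xy0 Rsub'[OF j_le] by auto
  have rs: "(\<Sum>y\<in>X. \<Sum>z\<in>X. adj a x z * adj b z y) = of_nat K * of_nat K"
    if "a \<in> {3,4}" "b \<in> {3,4}" for a b
  proof -
    have "(\<Sum>y\<in>X. \<Sum>z\<in>X. adj a x z * adj b z y) = (\<Sum>z\<in>X. adj a x z * (\<Sum>y\<in>X. adj b z y))"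
      by (subst sum.swap) (simp add: sum_distrib_left)
    also have "\<dots> = (\<Sum>z\<in>X. adj a x z * of_nat K)"
      using that row3 row4 by (intro sum.cong) auto
    also have "\<dots> = of_nat K * of_nat K" using that row3[OF x] row4[OF x]
      by (auto simp: sum_distrib_right[symmetric])
    finally show ?thesis .
  qed
  have rs2: "(\<Sum>y\<in>X. \<Sum>z\<in>X. adj a x z * adj b z y) = (\<Sum>l\<le>4. of_nat (P a b l) * of_nat (card {y\<in>X. (x,y) \<in> R l}))"
    if "a \<le> 4" "b \<le> 4" for a b
  proof -
    have "(\<Sum>y\<in>X. \<Sum>z\<in>X. adj a x z * adj b z y) = (\<Sum>y\<in>X. \<Sum>l\<le>4. of_nat (P a b l) * adj l x y)"
    proof (rule sum.cong[OF refl])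
      fix y assume y: "y \<in> X"
      obtain l where l: "l \<le> 4" "(x,y) \<in> R l" using cls[OF x y] by blast
      show "(\<Sum>z\<in>X. adj a x z * adj b z y) = (\<Sum>l\<le>4. of_nat (P a b l) * adj l x y)"
        using Pent[OF that l] sum_adj[OF l] by simp
    qed
    also have "\<dots> = (\<Sum>l\<le>4. of_nat (P a b l) * (\<Sum>y\<in>X. adj l x y))"
      by (subst sum.swap) (simp add: sum_distrib_left)
    also have "\<dots> = (\<Sum>l\<le>4. of_nat (P a b l) * of_nat (card {y\<in>X. (x,y) \<in> R l}))"
      by (simp add: rowsum)
    finally show ?thesis .
  qed
  define dg where "dg l = (of_nat (card {y\<in>X. (x,y) \<in> R l}) :: complex)" for l
  have e: "(\<Sum>l\<le>4. of_nat (P 3 4 l) * dg l) = (\<Sum>l\<le>4. of_nat (P 4 3 l) * dg l)"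
    using rs[of 3 4] rs[of 4 3] rs2[of 3 4] rs2[of 4 3] unfolding dg_def by simp
  have dgj: "dg j \<noteq> 0"
  proof -
    have "y0 \<in> {y\<in>X. (x,y) \<in> R j}" using xy0 Rsub'[OF j_le] by auto
    then have "card {y\<in>X. (x,y) \<in> R j} \<noteq> 0" using finX by auto
    then show ?thesis unfolding dg_def by simp
  qed
  have z1: "P 3 4 i = 0" "P 4 3 i = 0" using Pi0 by auto
  have q: "P 4 3 0 = P 3 4 0" "P 3 4 3 = P 4 3 3" "P 3 4 4 = P 4 3 4"
    using K4 comm34 P343 P433 by simp_all
  from e have e5: "of_nat (P 3 4 0) * dg 0 + of_nat (P 3 4 1) * dg 1 + of_nat (P 3 4 2) * dg 2 + of_nat (P 4 3 3) * dg 3 + of_nat (P 4 3 4) * dg 4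
     = of_nat (P 3 4 0) * dg 0 + of_nat (P 4 3 1) * dg 1 + of_nat (P 4 3 2) * dg 2 + of_nat (P 4 3 3) * dg 3 + of_nat (P 4 3 4) * dg 4"
    unfolding sum5 q by simp
  have "of_nat (P 3 4 j) * dg j = of_nat (P 4 3 j) * dg j"
    using ij12
  proof
    assume "i = 1 \<and> j = 2" then show ?thesis using e5 z1 by simp
  next
    assume "i = 2 \<and> j = 1" then show ?thesis using e5 z1 by simp
  qed
  then show ?thesis using dgj by simp
qed

end

context pf begin

definition inU :: "('a \<Rightarrow> complex) \<Rightarrow> bool" where
  "inU v \<longleftrightarrow> (\<forall>C\<in>Cs. (\<Sum>y\<in>C. v y) = 0)"

definition sS :: "('a \<Rightarrow> complex) \<Rightarrow> 'a \<Rightarrow> complex" where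
  "sS v = (\<lambda>x. nv 3 v x + nv 4 v x)"

definition tT :: "('a \<Rightarrow> complex) \<Rightarrow> 'a \<Rightarrow> complex" where
  "tT v = (\<lambda>x. nv 3 v x - nv 4 v x)"

lemma nv_cong: "(\<And>y. y \<in> X \<Longrightarrow> v y = u y) \<Longrightarrow> nv l v x = nv l u x"
  unfolding nv_def by (rule sum.cong) auto

lemma nv_add: "nv l (\<lambda>y. v y + u y) x = nv l v x + nv l u x"
  unfolding nv_def by (simp add: distrib_left sum.distrib)

lemma nv_diff: "nv l (\<lambda>y. v y - u y) x = nv l v x - nv l u x"
  unfolding nv_def by (simp add: right_diff_distrib sum_subtractf)

lemma nv_scale: "nv l (\<lambda>y. c * v y) x = c * nv l v x"
  unfolding nv_def by (simp add: sum_distrib_left mult_ac)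

lemma inU_add: "inU v \<Longrightarrow> inU u \<Longrightarrow> inU (\<lambda>y. v y + u y)"
  unfolding inU_def by (simp add: sum.distrib)

lemma inU_diff: "inU v \<Longrightarrow> inU u \<Longrightarrow> inU (\<lambda>y. v y - u y)"
  unfolding inU_def by (simp add: sum_subtractf)

lemma inU_scale: "inU v \<Longrightarrow> inU (\<lambda>y. c * v y)"
  unfolding inU_def by (simp add: sum_distrib_left[symmetric])

lemma sumX: "(\<Sum>y\<in>X. v y) = (\<Sum>C\<in>Cs. \<Sum>y\<in>C. v y)"
proof -
  have "(\<Sum>y\<in>X. v y) = (\<Sum>y\<in>\<Union>Cs. v y)" using CsU by simp
  also have "\<dots> = (\<Sum>C\<in>Cs. \<Sum>y\<in>C. v y)"
    by (rule sum.Union_disjoint[unfolded comp_def]) (use finC Csdisj in auto)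
  finally show ?thesis .
qed

lemma sumX_U: "inU v \<Longrightarrow> (\<Sum>y\<in>X. v y) = 0"
  unfolding sumX inU_def by simp

lemma nvi: assumes C: "C \<in> Cs" and x: "x \<in> C"
  shows "nv i v x = (\<Sum>y\<in>X. v y) - (\<Sum>y\<in>C. v y)"
proof -
  have "nv i v x = (\<Sum>y\<in>X. if y \<in> X - C then v y else 0)"
    unfolding nv_def
  proof (rule sum.cong[OF refl])
    fix y assume y: "y \<in> X"
    have "(x,y) \<in> R i \<longleftrightarrow> y \<notin> C" using Ri[of x y] y CX[OF C] x sameC_iff[OF C x] by auto
    then show "adj i x y * v y = (if y \<in> X - C then v y else 0)" using y by (auto simp: adj_def)
  qed
  also have "\<dots> = (\<Sum>y\<in>X - C. v y)"
  proof -
    have "X \<inter> {y. y \<notin> C} = X - C" by blast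
    then show ?thesis using finX by (simp add: sum.If_cases)
  qed
  also have "\<dots> = (\<Sum>y\<in>X. v y) - (\<Sum>y\<in>C. v y)" using finX CX[OF C] by (rule sum_diff)
  finally show ?thesis .
qed

lemma nvi_U: assumes "inU v" "x \<in> X" shows "nv i v x = 0"
proof -
  obtain C where C: "C \<in> Cs" "x \<in> C" using comp_ex[OF assms(2)] by auto
  show ?thesis using nvi[OF C] sumX_U[OF assms(1)] assms(1) C unfolding inU_def by simp
qed

lemma nv0: "x \<in> X \<Longrightarrow> nv 0 v x = v x"
proof -
  assume x: "x \<in> X"
  have "nv 0 v x = (\<Sum>y\<in>X. if y = x then v y else 0)"
    unfolding nv_def by (rule sum.cong) (auto simp: adj_def R0)
  also have "\<dots> = v x" using x finX by simp
  finally show ?thesis .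
qed

lemma nv_all: assumes x: "x \<in> X" shows "(\<Sum>l\<le>4. nv l v x) = (\<Sum>y\<in>X. v y)"
proof -
  have "(\<Sum>l\<le>4. nv l v x) = (\<Sum>y\<in>X. (\<Sum>l\<le>4. 1 * adj l x y) * v y)"
    unfolding nv_def by (subst sum.swap) (simp add: sum_distrib_right)
  also have "\<dots> = (\<Sum>y\<in>X. v y)"
  proof (rule sum.cong[OF refl])
    fix y assume y: "y \<in> X"
    obtain l where l: "l \<le> 4" "(x,y) \<in> R l" using cls[OF x y] by blast
    show "(\<Sum>l\<le>4. 1 * adj l x y) * v y = v y" using sum_adj[OF l, of "\<lambda>_. 1"] by simp
  qed
  finally show ?thesis .
qed

lemma nvj_U: assumes "inU v" "x \<in> X" shows "nv j v x = - v x - nv 3 v x - nv 4 v x"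
proof -
  have "(\<Sum>l\<le>4. nv l v x) = 0" using nv_all[OF assms(2)] sumX_U[OF assms(1)] by simp
  then have "nv 0 v x + nv 1 v x + nv 2 v x + nv 3 v x + nv 4 v x = 0" unfolding sum5 .
  then have "v x + nv i v x + nv j v x + nv 3 v x + nv 4 v x = 0"
    using ij12 nv0[OF assms(2)] by (auto simp: algebra_simps)
  then have h: "v x + nv j v x + nv 3 v x + nv 4 v x = 0" using nvi_U[OF assms] by simp
  have "nv j v x - (- v x - nv 3 v x - nv 4 v x) = v x + nv j v x + nv 3 v x + nv 4 v x"
    by (simp add: algebra_simps)
  with h show ?thesis by simp
qed

lemma red: assumes "inU v" "x \<in> X" "a \<le> 4" "b \<le> 4"
  shows "nv a (nv b v) x = of_nat (P a b 0) * v x + of_nat (P a b 3) * nv 3 v x + of_nat (P a b 4) * nv 4 v x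
     - of_nat (P a b j) * (v x + nv 3 v x + nv 4 v x)"
proof -
  have "nv a (nv b v) x = (\<Sum>l\<le>4. of_nat (P a b l) * nv l v x)" using Pprod assms by simp
  also have "\<dots> = of_nat (P a b 0) * nv 0 v x + of_nat (P a b 1) * nv 1 v x + of_nat (P a b 2) * nv 2 v x
      + of_nat (P a b 3) * nv 3 v x + of_nat (P a b 4) * nv 4 v x" unfolding sum5 ..
  also have "\<dots> = of_nat (P a b 0) * nv 0 v x + of_nat (P a b i) * nv i v x + of_nat (P a b j) * nv j v x
      + of_nat (P a b 3) * nv 3 v x + of_nat (P a b 4) * nv 4 v x"
    using ij12 by (auto simp: algebra_simps)
  also have "\<dots> = of_nat (P a b 0) * v x + of_nat (P a b 3) * nv 3 v x + of_nat (P a b 4) * nv 4 v x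
     - of_nat (P a b j) * (v x + nv 3 v x + nv 4 v x)"
    unfolding nv0[OF assms(2)] nvi_U[OF assms(1,2)] nvj_U[OF assms(1,2)] by (simp add: algebra_simps)
  finally show ?thesis .
qed

lemma col4C: assumes C: "C \<in> Cs" and y: "y \<in> X"
  shows "(\<Sum>x\<in>C. adj 4 x y) = (if y \<in> C then of_nat K else 0)"
proof -
  have "(\<Sum>x\<in>C. adj 4 x y) = of_nat (card {x\<in>C. (x,y) \<in> R 4})"
    unfolding adj_def using finC[OF C] by (rule sum_ind)
  moreover have "{x\<in>C. (x,y) \<in> R 4} = (if y \<in> C then {x\<in>X. (y,x) \<in> R 3} else {})"
  proof (cases "y \<in> C")
    case True
    have "{x\<in>C. (x,y) \<in> R 4} = {x\<in>X. (y,x) \<in> R 3}"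
    proof (intro equalityI subsetI)
      fix x assume "x \<in> {x\<in>C. (x,y) \<in> R 4}"
      then show "x \<in> {x\<in>X. (y,x) \<in> R 3}" using CX[OF C] R43 by blast
    next
      fix x assume "x \<in> {x\<in>X. (y,x) \<in> R 3}"
      then have "(x,y) \<in> R 4" using R43 by blast
      then show "x \<in> {x\<in>C. (x,y) \<in> R 4}" using R4C''[OF C True] by blast
    qed
    then show ?thesis using True by simp
  next
    case False
    have "{x\<in>C. (x,y) \<in> R 4} = {}" using R4C'[OF C] False by blast
    then show ?thesis using False by simp
  qed
  ultimately show ?thesis using deg3[OF y] by simp
qed

lemma colsum: assumes C: "C \<in> Cs" and a: "a \<in> {3,4}"
  shows "(\<Sum>x\<in>C. nv a v x) = of_nat K * (\<Sum>y\<in>C. v y)"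
proof -
  have "(\<Sum>x\<in>C. nv a v x) = (\<Sum>y\<in>X. (\<Sum>x\<in>C. adj a x y) * v y)"
    unfolding nv_def by (subst sum.swap) (simp add: sum_distrib_right)
  also have "\<dots> = (\<Sum>y\<in>X. if y \<in> C then of_nat K * v y else 0)"
    using col3C[OF C] col4C[OF C] a by (intro sum.cong) auto
  also have "\<dots> = (\<Sum>y\<in>C. of_nat K * v y)"
    using finX CX[OF C] by (simp add: sum.If_cases Int_absorb1)
  finally show ?thesis by (simp add: sum_distrib_left)
qed

lemma inU_nv: "inU v \<Longrightarrow> a \<in> {3,4} \<Longrightarrow> inU (nv a v)"
  unfolding inU_def using colsum by simp

lemma inU_sS: "inU v \<Longrightarrow> inU (sS v)"
  unfolding sS_def by (rule inU_add; rule inU_nv) auto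

lemma inU_tT: "inU v \<Longrightarrow> inU (tT v)"
  unfolding tT_def by (rule inU_diff; rule inU_nv) auto

end

context pf begin

lemma tpj: "tp j = j" using ij by (auto simp: tp_def)

lemma Pcanon: "P 4 4 0 = P 3 3 0" "P 4 4 3 = P 3 3 4" "P 4 4 4 = P 3 3 3" "P 4 4 j = P 3 3 j"
  "P 3 4 4 = P 3 4 3" "P 4 3 4 = P 3 4 3" "P 4 3 3 = P 3 4 3" "P 4 3 0 = P 3 4 0" "P 4 3 j = P 3 4 j"
proof -
  show "P 4 4 0 = P 3 3 0" using P_tp[of 3 3 0] by (simp add: tp_def)
  show "P 4 4 3 = P 3 3 4" using P_tp[of 3 3 4] by (simp add: tp_def)
  show "P 4 4 4 = P 3 3 3" using P_tp[of 3 3 3] by (simp add: tp_def)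
  show "P 4 4 j = P 3 3 j" using P_tp[of 3 3 j] j_le tpj by (simp add: tp_def)
  show "P 3 4 4 = P 3 4 3" using P343 by simp
  show "P 4 3 4 = P 3 4 3" using P343 comm34 by simp
  show "P 4 3 3 = P 3 4 3" using P343 comm34 P433 by simp
  show "P 4 3 0 = P 3 4 0" using K4 by simp
  show "P 4 3 j = P 3 4 j" using commj by simp
qed

lemma E1: assumes "inU v" "x \<in> X" shows "nv 3 (nv 4 v) x = nv 4 (nv 3 v) x"
  using red[OF assms, of 3 4] red[OF assms, of 4 3] by (simp add: Pcanon)

definition "pp a b l = (of_nat (P a b l) :: complex)"

definition "c0 = pp 3 3 0 + pp 3 4 0 + pp 3 4 0 + pp 3 3 0 - (pp 3 3 j + pp 3 4 j + pp 3 4 j + pp 3 3 j)"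
definition "c1 = pp 3 3 3 + pp 3 4 3 + pp 3 4 3 + pp 3 3 4 - (pp 3 3 j + pp 3 4 j + pp 3 4 j + pp 3 3 j)"
definition "e0 = pp 3 3 0 - pp 3 4 0 - pp 3 4 0 + pp 3 3 0 - (pp 3 3 j - pp 3 4 j - pp 3 4 j + pp 3 3 j)"
definition "e1 = pp 3 3 3 - pp 3 4 3 - pp 3 4 3 + pp 3 3 4 - (pp 3 3 j - pp 3 4 j - pp 3 4 j + pp 3 3 j)"
definition "gam = pp 3 3 3 - pp 3 3 4"

lemma real_consts: "cnj c0 = c0" "cnj c1 = c1" "cnj e0 = e0" "cnj e1 = e1" "cnj gam = gam"
  by (simp_all add: c0_def c1_def e0_def e1_def gam_def pp_def)

lemma E2: assumes "inU v" "x \<in> X" shows "sS (sS v) x = c0 * v x + c1 * sS v x"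
proof -
  have "sS (sS v) x = nv 3 (nv 3 v) x + nv 3 (nv 4 v) x + (nv 4 (nv 3 v) x + nv 4 (nv 4 v) x)"
    unfolding sS_def nv_add by simp
  then show ?thesis
    using red[OF assms, of 3 3] red[OF assms, of 3 4] red[OF assms, of 4 3] red[OF assms, of 4 4]
    by (simp add: Pcanon c0_def c1_def pp_def sS_def algebra_simps)
qed

lemma E3: assumes "inU v" "x \<in> X" shows "tT (tT v) x = e0 * v x + e1 * sS v x"
proof -
  have "tT (tT v) x = nv 3 (nv 3 v) x - nv 3 (nv 4 v) x - (nv 4 (nv 3 v) x - nv 4 (nv 4 v) x)"
    unfolding tT_def nv_diff by simp
  then show ?thesis
    using red[OF assms, of 3 3] red[OF assms, of 3 4] red[OF assms, of 4 3] red[OF assms, of 4 4]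
    by (simp add: Pcanon e0_def e1_def pp_def sS_def algebra_simps)
qed

lemma E4a: assumes "inU v" "x \<in> X" shows "sS (tT v) x = gam * tT v x"
proof -
  have "sS (tT v) x = nv 3 (nv 3 v) x - nv 3 (nv 4 v) x + (nv 4 (nv 3 v) x - nv 4 (nv 4 v) x)"
    unfolding tT_def sS_def nv_diff by simp
  then show ?thesis
    using red[OF assms, of 3 3] red[OF assms, of 3 4] red[OF assms, of 4 3] red[OF assms, of 4 4]
    by (simp add: Pcanon gam_def pp_def tT_def algebra_simps)
qed

lemma E4b: assumes "inU v" "x \<in> X" shows "tT (sS v) x = gam * tT v x"
proof -
  have "tT (sS v) x = nv 3 (nv 3 v) x + nv 3 (nv 4 v) x - (nv 4 (nv 3 v) x + nv 4 (nv 4 v) x)"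
    unfolding tT_def sS_def nv_add by simp
  then show ?thesis
    using red[OF assms, of 3 3] red[OF assms, of 3 4] red[OF assms, of 4 3] red[OF assms, of 4 4]
    by (simp add: Pcanon gam_def pp_def tT_def algebra_simps)
qed

lemma comm_ST: assumes "inU v" "x \<in> X" shows "sS (tT v) x = tT (sS v) x"
  using E4a[OF assms] E4b[OF assms] by simp

lemma comm_N3S: assumes "inU v" "x \<in> X" shows "nv 3 (sS v) x = sS (nv 3 v) x"
  unfolding sS_def nv_add using E1[OF assms] by simp

end

context pf begin

definition nz :: "('a \<Rightarrow> complex) \<Rightarrow> bool" where
  "nz v \<longleftrightarrow> (\<exists>x\<in>X. v x \<noteq> 0)"

definition ip :: "('a \<Rightarrow> complex) \<Rightarrow> ('a \<Rightarrow> complex) \<Rightarrow> complex" where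
  "ip u v = (\<Sum>x\<in>X. u x * cnj (v x))"

lemma nv_lc: "nv l (\<lambda>y. a * f y + b * g y) x = a * nv l f x + b * nv l g x"
  unfolding nv_def by (simp add: distrib_left sum.distrib sum_distrib_left mult_ac)

lemma sS_lc: "sS (\<lambda>y. a * f y + b * g y) x = a * sS f x + b * sS g x"
  unfolding sS_def nv_lc by (simp add: algebra_simps)

lemma tT_lc: "tT (\<lambda>y. a * f y + b * g y) x = a * tT f x + b * tT g x"
  unfolding tT_def nv_lc by (simp add: algebra_simps)

lemma sS_scale: "sS (\<lambda>y. c * f y) x = c * sS f x"
  using sS_lc[of c f 0 f x] by simp

lemma tT_scale: "tT (\<lambda>y. c * f y) x = c * tT f x"
  using tT_lc[of c f 0 f x] by simp

lemma nv3_scale: "nv 3 (\<lambda>y. c * f y) x = c * nv 3 f x"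
  using nv_scale by simp

lemma sS_cong: "(\<And>y. y \<in> X \<Longrightarrow> v y = u y) \<Longrightarrow> sS v x = sS u x"
  unfolding sS_def using nv_cong by metis

lemma tT_cong: "(\<And>y. y \<in> X \<Longrightarrow> v y = u y) \<Longrightarrow> tT v x = tT u x"
  unfolding tT_def using nv_cong by metis

lemma inU_lc: "inU f \<Longrightarrow> inU g \<Longrightarrow> inU (\<lambda>y. a * f y + b * g y)"
  by (intro inU_add inU_scale)

lemma nv3_ST: "nv 3 v x = (sS v x + tT v x) / 2"
  unfolding sS_def tT_def by simp

lemma ip_lc_left: "ip (\<lambda>y. a * f y + b * g y) h = a * ip f h + b * ip g h"
  unfolding ip_def by (simp add: algebra_simps sum.distrib sum_distrib_left)

lemma ip_lc_right: "ip h (\<lambda>y. a * f y + b * g y) = cnj a * ip h f + cnj b * ip h g"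
  unfolding ip_def by (simp add: distrib_left sum.distrib sum_distrib_left mult_ac)

lemma ip_cong: "(\<And>x. x \<in> X \<Longrightarrow> f x = f' x) \<Longrightarrow> (\<And>x. x \<in> X \<Longrightarrow> g x = g' x) \<Longrightarrow> ip f g = ip f' g'"
  unfolding ip_def by (rule sum.cong) auto

lemma ip_self: "ip f f = of_real (\<Sum>x\<in>X. (cmod (f x))\<^sup>2)"
  unfolding ip_def of_real_sum by (rule sum.cong[OF refl]) (rule complex_norm_square[symmetric])

lemma nz_pos: "nz f \<Longrightarrow> (\<Sum>x\<in>X. (cmod (f x))\<^sup>2) > 0"
proof -
  assume "nz f"
  then obtain x where x: "x \<in> X" "f x \<noteq> 0" unfolding nz_def by auto
  have "(cmod (f x))\<^sup>2 \<le> (\<Sum>x\<in>X. (cmod (f x))\<^sup>2)"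
    using x finX by (intro member_le_sum) auto
  moreover have "(cmod (f x))\<^sup>2 > 0" using x by simp
  ultimately show ?thesis by linarith
qed

lemma nz_ip: "nz f \<Longrightarrow> ip f f \<noteq> 0"
  using nz_pos ip_self by (metis less_irrefl of_real_eq_0_iff)

lemma adj_real: "cnj (adj l x y) = adj l x y" by (simp add: adj_def)

lemma adj43: "adj 4 y x = adj 3 x y" using R43 by (simp add: adj_def)

lemma ip_n3: "ip (nv 3 f) g = ip f (nv 4 g)"
proof -
  have "ip (nv 3 f) g = (\<Sum>x\<in>X. \<Sum>y\<in>X. adj 3 x y * f y * cnj (g x))"
    unfolding ip_def nv_def by (simp add: sum_distrib_right)
  also have "\<dots> = (\<Sum>y\<in>X. \<Sum>x\<in>X. adj 3 x y * f y * cnj (g x))" by (rule sum.swap)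
  also have "\<dots> = ip f (nv 4 g)"
    unfolding ip_def nv_def by (simp add: sum_distrib_left adj43 adj_real mult_ac)
  finally show ?thesis .
qed

lemma ip_n4: "ip (nv 4 f) g = ip f (nv 3 g)"
proof -
  have "ip (nv 4 f) g = (\<Sum>x\<in>X. \<Sum>y\<in>X. adj 3 y x * f y * cnj (g x))"
    unfolding ip_def nv_def by (simp add: sum_distrib_right adj43)
  also have "\<dots> = (\<Sum>y\<in>X. \<Sum>x\<in>X. adj 3 y x * f y * cnj (g x))" by (rule sum.swap)
  also have "\<dots> = ip f (nv 3 g)"
    unfolding ip_def nv_def by (simp add: sum_distrib_left adj_real mult_ac)
  finally show ?thesis .
qed

lemma ip_add_left: "ip (\<lambda>y. f y + g y) h = ip f h + ip g h"
  using ip_lc_left[of 1 f 1 g h] by simp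
lemma ip_diff_left: "ip (\<lambda>y. f y - g y) h = ip f h - ip g h"
  using ip_lc_left[of 1 f "-1" g h] by simp
lemma ip_add_right: "ip h (\<lambda>y. f y + g y) = ip h f + ip h g"
  using ip_lc_right[of h 1 f 1 g] by simp
lemma ip_diff_right: "ip h (\<lambda>y. f y - g y) = ip h f - ip h g"
  using ip_lc_right[of h 1 f "-1" g] by simp

lemma ip_S: "ip (sS f) g = ip f (sS g)"
  unfolding sS_def ip_add_left ip_add_right ip_n3 ip_n4 by simp

lemma ip_T: "ip (tT f) g = - ip f (tT g)"
  unfolding tT_def ip_diff_left ip_diff_right ip_n3 ip_n4 by simp

lemma ip_scale_right: "ip h (\<lambda>y. c * f y) = cnj c * ip h f"
  using ip_lc_right[of h c f 0 f] by simp
lemma ip_scale_left: "ip (\<lambda>y. c * f y) h = c * ip f h"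
  using ip_lc_left[of c f 0 f h] by simp

lemma nv_delta: "a \<in> X \<Longrightarrow> nv l (\<lambda>z. if z = a then 1 else 0) x = adj l x a"
  unfolding nv_def using finX by (simp add: if_distrib cong: if_cong)

lemma adj_diag34: "x \<in> X \<Longrightarrow> l \<in> {3,4} \<Longrightarrow> adj l x x = 0"
proof -
  assume "x \<in> X" "l \<in> {3,4}"
  then have "(x,x) \<in> R 0" "l \<le> 4" "l \<noteq> 0" using R0 by auto
  then have "(x,x) \<notin> R l" using disj[of 0 l x x] by auto
  then show ?thesis by (simp add: adj_def)
qed

lemma NSlemma: "\<not> (\<exists>\<rho>. \<forall>v. inU v \<longrightarrow> (\<forall>x\<in>X. sS v x = \<rho> * v x))"
proof
  assume "\<exists>\<rho>. \<forall>v. inU v \<longrightarrow> (\<forall>x\<in>X. sS v x = \<rho> * v x)"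
  then obtain \<rho> where rho: "\<And>v x. inU v \<Longrightarrow> x \<in> X \<Longrightarrow> sS v x = \<rho> * v x" by blast
  obtain x y z C where C: "C \<in> Cs" "x \<in> C" "y \<in> C" "z \<in> C" and xy: "x \<noteq> y" "(x,y) \<notin> R 3 \<union> R 4"
    and xz: "(x,z) \<in> R 3 \<union> R 4" using NS by blast
  have X: "x \<in> X" "y \<in> X" "z \<in> X" using C CX by auto
  define e where "e a b = (\<lambda>t. (if t = a then 1 else 0) - (if t = b then (1::complex) else 0))" for a b :: 'a
  have eU: "inU (e a b)" if "a \<in> C" "b \<in> C" for a b
    unfolding inU_def
  proof
    fix D assume D: "D \<in> Cs"
    have "a \<in> D \<longleftrightarrow> b \<in> D" using comp_uniq[OF C(1) D] that by blast
    then show "(\<Sum>t\<in>D. e a b t) = 0" unfolding e_def using finC[OF D]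
      by (simp add: sum_subtractf)
  qed
  have Se: "sS (e a b) x = adj 3 x a + adj 4 x a - (adj 3 x b + adj 4 x b)" if "a \<in> X" "b \<in> X" for a b
    unfolding sS_def e_def nv_diff nv_delta[OF that(1)] nv_delta[OF that(2)] by simp
  have d3: "adj 3 x x = 0" "adj 4 x x = 0" using adj_diag34[OF X(1)] by auto
  have "sS (e x y) x = 0" using Se[OF X(1) X(2)] d3 xy by (simp add: adj_def)
  moreover have "sS (e x y) x = \<rho> * e x y x" using rho[OF eU[OF C(2) C(3)] X(1)] .
  ultimately have r0: "\<rho> = 0" using xy by (simp add: e_def)
  have "adj 3 x z + adj 4 x z = 1" using xz disj[of 3 4 x z] by (auto simp: adj_def)
  then have "sS (e x z) x = -1" using Se[OF X(1) X(3)] d3 by simp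
  moreover have "sS (e x z) x = \<rho> * e x z x" using rho[OF eU[OF C(2) C(4)] X(1)] .
  ultimately show False using r0 by simp
qed

lemma T_nonzero: "\<exists>v. inU v \<and> nz (tT v)"
proof -
  obtain x y where xy: "(x,y) \<in> R 3" using Rne[of 3] by auto
  obtain C where C: "C \<in> Cs" "x \<in> C" "y \<in> C" using R3C[OF xy] by auto
  have X: "x \<in> X" "y \<in> X" using C CX by auto
  define e where "e = (\<lambda>t. (if t = x then 1 else 0) - (if t = y then (1::complex) else 0))"
  have eU: "inU e"
    unfolding inU_def
  proof
    fix D assume D: "D \<in> Cs"
    have "x \<in> D \<longleftrightarrow> y \<in> D" using comp_uniq[OF C(1) D] C by blast
    then show "(\<Sum>t\<in>D. e t) = 0" unfolding e_def using finC[OF D]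
      by (simp add: sum_subtractf)
  qed
  have "tT e x = adj 3 x x - adj 4 x x - (adj 3 x y - adj 4 x y)"
    unfolding tT_def e_def nv_diff nv_delta[OF X(1)] nv_delta[OF X(2)] by simp
  also have "\<dots> = -1"
  proof -
    have "(x,y) \<notin> R 4" using disj[of 3 4 x y] xy by auto
    then show ?thesis using adj_diag34[OF X(1)] xy by (simp add: adj_def)
  qed
  finally have "tT e x \<noteq> 0" by simp
  then show ?thesis using eU X unfolding nz_def by blast
qed

end

context pf begin

definition sev :: "complex \<Rightarrow> bool" where
  "sev \<mu> \<longleftrightarrow> (\<exists>v. inU v \<and> nz v \<and> (\<forall>x\<in>X. sS v x = \<mu> * v x))"

definition Lam :: "complex set" where
  "Lam = {\<mu>. \<exists>v. inU v \<and> nz v \<and> (\<forall>x\<in>X. nv 3 v x = \<mu> * v x)}"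

lemma sev_real: assumes "sev \<mu>" shows "cnj \<mu> = \<mu>"
proof -
  obtain v where v: "inU v" "nz v" "\<And>x. x \<in> X \<Longrightarrow> sS v x = \<mu> * v x" using assms sev_def by auto
  have "ip (sS v) v = ip (\<lambda>y. \<mu> * v y) v" by (rule ip_cong) (use v in auto)
  also have "\<dots> = \<mu> * ip v v" by (rule ip_scale_left)
  finally have 1: "ip (sS v) v = \<mu> * ip v v" .
  have "ip v (sS v) = ip v (\<lambda>y. \<mu> * v y)" by (rule ip_cong) (use v in auto)
  also have "\<dots> = cnj \<mu> * ip v v" by (rule ip_scale_right)
  finally have 2: "ip v (sS v) = cnj \<mu> * ip v v" .
  have "\<mu> * ip v v = cnj \<mu> * ip v v" by (metis 1 2 ip_S)
  then show ?thesis using nz_ip[OF v(2)] by (metis mult_right_cancel)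
qed

lemma sev_other:
  assumes ab: "\<And>v x. inU v \<Longrightarrow> x \<in> X \<Longrightarrow> sS (sS v) x = (a + b) * sS v x - a * b * v x"
  shows "sev b"
proof (rule ccontr)
  assume nb: "\<not> sev b"
  have "\<forall>v. inU v \<longrightarrow> (\<forall>x\<in>X. sS v x = a * v x)"
  proof (intro allI impI ballI)
    fix v x assume v: "inU v" and x: "x \<in> X"
    define u where "u = (\<lambda>y. 1 * sS v y + (-a) * v y)"
    have uU: "inU u" unfolding u_def by (intro inU_lc inU_sS v)
    have "\<forall>x\<in>X. sS u x = b * u x"
    proof
      fix x assume x: "x \<in> X"
      have "sS u x = sS (sS v) x - a * sS v x" unfolding u_def sS_lc by simp
      also have "\<dots> = b * u x" unfolding ab[OF v x] u_def by (simp add: algebra_simps)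
      finally show "sS u x = b * u x" .
    qed
    then have "\<not> nz u" using nb uU unfolding sev_def by blast
    then have "u x = 0" using x unfolding nz_def by auto
    then show "sS v x = a * v x" unfolding u_def by simp
  qed
  then show False using NSlemma by blast
qed

definition "dd = c1\<^sup>2 + 4 * c0"
definition "rho1 = (c1 + csqrt dd) / 2"
definition "rho2 = (c1 - csqrt dd) / 2"

lemma rho_sum: "rho1 + rho2 = c1" by (simp add: rho1_def rho2_def field_simps)
lemma rho_prod: "rho1 * rho2 = - c0"
proof -
  have "rho1 * rho2 = (c1\<^sup>2 - (csqrt dd)\<^sup>2) / 4"
    by (simp add: rho1_def rho2_def field_simps power2_eq_square)
  also have "\<dots> = - c0" by (simp add: dd_def)
  finally show ?thesis .
qed

lemma quad: "inU v \<Longrightarrow> x \<in> X \<Longrightarrow> sS (sS v) x = (rho1 + rho2) * sS v x - rho1 * rho2 * v x"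
  using E2 rho_sum rho_prod by simp

lemma sev_rho: "sev rho1" "sev rho2"
  using sev_other[of rho1 rho2] sev_other[of rho2 rho1] quad by (auto simp: add.commute mult.commute)

lemma sev_eig: assumes "sev \<mu>" shows "\<mu> = rho1 \<or> \<mu> = rho2"
proof -
  obtain v where v: "inU v" "nz v" "\<And>x. x \<in> X \<Longrightarrow> sS v x = \<mu> * v x" using assms sev_def by auto
  obtain x where x: "x \<in> X" "v x \<noteq> 0" using v(2) nz_def by auto
  have "sS (sS v) x = sS (\<lambda>y. \<mu> * v y) x" by (rule sS_cong) (use v in auto)
  also have "\<dots> = \<mu> * (\<mu> * v x)" using sS_scale v(3)[OF x(1)] by simp
  finally have "\<mu> * (\<mu> * v x) = (rho1 + rho2) * (\<mu> * v x) - rho1 * rho2 * v x"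
    using quad[OF v(1) x(1)] v(3)[OF x(1)] by simp
  then have "((\<mu> - rho1) * (\<mu> - rho2)) * v x = 0" by (simp add: algebra_simps)
  then show ?thesis using x(2) by simp
qed

lemma rho_distinct: "rho1 \<noteq> rho2"
proof
  assume eq: "rho1 = rho2"
  define \<rho> where "\<rho> = rho1"
  have rr: "cnj \<rho> = \<rho>" using sev_real sev_rho unfolding \<rho>_def by blast
  have "\<forall>v. inU v \<longrightarrow> (\<forall>x\<in>X. sS v x = \<rho> * v x)"
  proof (intro allI impI)
    fix v assume v: "inU v"
    define u where "u = (\<lambda>y. 1 * sS v y + (-\<rho>) * v y)"
    have uU: "inU u" unfolding u_def by (intro inU_lc inU_sS v)
    have Su: "sS u x = \<rho> * u x" if x: "x \<in> X" for x
    proof -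
      have "sS u x = sS (sS v) x - \<rho> * sS v x" unfolding u_def sS_lc by simp
      also have "\<dots> = \<rho> * u x" unfolding quad[OF v x] u_def \<rho>_def eq by (simp add: algebra_simps)
      finally show ?thesis .
    qed
    have "ip u u = ip (sS v) u - \<rho> * ip v u" unfolding u_def ip_lc_left by simp
    also have "ip (sS v) u = ip v (sS u)" by (rule ip_S)
    also have "ip v (sS u) = ip v (\<lambda>y. \<rho> * u y)" by (rule ip_cong) (use Su in auto)
    also have "\<dots> = \<rho> * ip v u" unfolding ip_scale_right rr ..
    finally have "ip u u = 0" by simp
    then have "\<not> nz u" using nz_ip by blast
    then show "\<forall>x\<in>X. sS v x = \<rho> * v x" unfolding nz_def u_def by simp
  qed
  then show False using NSlemma by blast
qed

lemma sev_gam: "sev gam"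
proof -
  obtain v where v: "inU v" "nz (tT v)" using T_nonzero by blast
  show ?thesis unfolding sev_def
    using inU_tT[OF v(1)] v(2) E4a[OF v(1)] by blast
qed

lemma rs_exist: "\<exists>r0 s0. r0 \<noteq> s0 \<and> sev r0 \<and> sev s0 \<and> s0 = gam \<and>
   (\<forall>v x. inU v \<longrightarrow> x \<in> X \<longrightarrow> sS (sS v) x = (r0 + s0) * sS v x - r0 * s0 * v x)"
proof (cases "gam = rho1")
  case True
  then show ?thesis using rho_distinct sev_rho quad
    by (intro exI[of _ rho2] exI[of _ rho1]) (auto simp: add.commute mult.commute)
next
  case False
  then have "gam = rho2" using sev_eig sev_gam by blast
  then show ?thesis using rho_distinct sev_rho quad
    by (intro exI[of _ rho1] exI[of _ rho2]) auto
qed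

lemma Lam_conj: "\<mu> \<in> Lam \<Longrightarrow> cnj \<mu> \<in> Lam"
proof -
  assume "\<mu> \<in> Lam"
  then obtain v where v: "inU v" "nz v" "\<And>x. x \<in> X \<Longrightarrow> nv 3 v x = \<mu> * v x" unfolding Lam_def by auto
  define u where "u = (\<lambda>y. cnj (v y))"
  have "inU u" using v(1) unfolding inU_def u_def by (metis complex_cnj_zero cnj_sum)
  moreover have "nz u" using v(2) unfolding nz_def u_def by simp
  moreover have "nv 3 u x = cnj \<mu> * u x" if "x \<in> X" for x
  proof -
    have "nv 3 u x = cnj (nv 3 v x)" unfolding nv_def u_def cnj_sum by (simp add: adj_real)
    then show ?thesis using v(3)[OF that] unfolding u_def by simp
  qed
  ultimately show "cnj \<mu> \<in> Lam" unfolding Lam_def by blast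
qed

lemma Lam_bound: assumes "\<mu> \<in> Lam" shows "cmod \<mu> \<le> of_nat K"
proof -
  obtain v where v: "inU v" "nz v" "\<And>x. x \<in> X \<Longrightarrow> nv 3 v x = \<mu> * v x" using assms unfolding Lam_def by auto
  define m where "m = Max ((\<lambda>x. cmod (v x)) ` X)"
  have "m \<in> (\<lambda>x. cmod (v x)) ` X" unfolding m_def using finX Xne by (intro Max_in) auto
  then obtain x0 where x0: "x0 \<in> X" "cmod (v x0) = m" by auto
  have mle: "cmod (v y) \<le> m" if "y \<in> X" for y unfolding m_def using finX that by auto
  obtain x1 where x1: "x1 \<in> X" "v x1 \<noteq> 0" using v(2) nz_def by auto
  have mpos: "m > 0" using mle[OF x1(1)] x1(2) by (metis less_le_trans zero_less_norm_iff)
  have "cmod \<mu> * m = cmod (nv 3 v x0)" using v(3)[OF x0(1)] x0(2) by (simp add: norm_mult)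
  also have "\<dots> \<le> (\<Sum>y\<in>X. cmod (adj 3 x0 y * v y))" unfolding nv_def by (rule norm_sum)
  also have "\<dots> \<le> (\<Sum>y\<in>X. (if (x0,y) \<in> R 3 then 1 else 0) * m)"
    by (rule sum_mono) (auto simp: adj_def mle norm_mult)
  also have "\<dots> = of_nat (card {y\<in>X. (x0,y) \<in> R 3}) * m"
    using finX by (simp add: sum.If_cases Int_def sum_distrib_right[symmetric])
  also have "\<dots> = of_nat K * m" using deg3[OF x0(1)] by simp
  finally show ?thesis using mpos by simp
qed

end

context pf begin

context
  fixes r0 s0 :: complex
  assumes rs_ne: "r0 \<noteq> s0" and sev_r: "sev r0" and sev_s: "sev s0" and s_gam: "s0 = gam"
   and quad2: "\<And>v x. inU v \<Longrightarrow> x \<in> X \<Longrightarrow> sS (sS v) x = (r0 + s0) * sS v x - r0 * s0 * v x"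
begin

lemma Vr_T0: assumes v: "inU v" and Sv: "\<And>y. y \<in> X \<Longrightarrow> sS v y = r0 * v y" and x: "x \<in> X"
  shows "tT v x = 0"
proof -
  have "s0 * tT v x = sS (tT v) x" using E4a[OF v x] s_gam by simp
  also have "\<dots> = tT (sS v) x" by (rule comm_ST[OF v x])
  also have "\<dots> = tT (\<lambda>y. r0 * v y) x" by (rule tT_cong) (use Sv in auto)
  also have "\<dots> = r0 * tT v x" by (rule tT_scale)
  finally have "(s0 - r0) * tT v x = 0" by (simp add: algebra_simps)
  then show ?thesis using rs_ne by simp
qed

lemma r_Lam: "r0 / 2 \<in> Lam"
proof -
  obtain v where v: "inU v" "nz v" "\<And>x. x \<in> X \<Longrightarrow> sS v x = r0 * v x" using sev_r sev_def by auto
  have "nv 3 v x = r0 / 2 * v x" if x: "x \<in> X" for x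
    unfolding nv3_ST using Vr_T0[OF v(1) v(3) x] v(3)[OF x] by simp
  then show ?thesis unfolding Lam_def using v by blast
qed

definition "vr v = (\<lambda>y. (1 / (r0 - s0)) * sS v y + (- s0 / (r0 - s0)) * v y)"
definition "vs v = (\<lambda>y. (- 1 / (r0 - s0)) * sS v y + (r0 / (r0 - s0)) * v y)"

lemma dec: "v x = vr v x + vs v x"
proof -
  have D: "r0 - s0 \<noteq> 0" using rs_ne by auto
  have e: "r0 / (r0 - s0) - s0 / (r0 - s0) = 1"
    by (metis D diff_divide_distrib divide_self)
  have "vr v x + vs v x = (1 / (r0 - s0) + (- 1 / (r0 - s0))) * sS v x + (r0 / (r0 - s0) - s0 / (r0 - s0)) * v x"
    unfolding vr_def vs_def by (simp add: algebra_simps)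
  also have "\<dots> = v x" unfolding e by simp
  finally show ?thesis by simp
qed

lemma inU_vr: "inU v \<Longrightarrow> inU (vr v)" unfolding vr_def by (intro inU_lc inU_sS)
lemma inU_vs: "inU v \<Longrightarrow> inU (vs v)" unfolding vs_def by (intro inU_lc inU_sS)

lemma Svr: assumes "inU v" "x \<in> X" shows "sS (vr v) x = r0 * vr v x"
proof -
  have "r0 - s0 \<noteq> 0" using rs_ne by auto
  then show ?thesis unfolding vr_def sS_lc quad2[OF assms] by (simp add: field_simps)
qed

lemma Svs: assumes "inU v" "x \<in> X" shows "sS (vs v) x = s0 * vs v x"
proof -
  have "r0 - s0 \<noteq> 0" using rs_ne by auto
  then show ?thesis unfolding vs_def sS_lc quad2[OF assms] by (simp add: field_simps)
qed

lemma N3_lc: "nv 3 (\<lambda>y. a * f y + b * g y) x = a * nv 3 f x + b * nv 3 g x"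
  by (rule nv_lc)

lemma N3S_eig: assumes v: "inU v" and ev: "\<And>y. y \<in> X \<Longrightarrow> nv 3 v y = \<mu> * v y" and x: "x \<in> X"
  shows "nv 3 (sS v) x = \<mu> * sS v x"
proof -
  have "nv 3 (sS v) x = sS (nv 3 v) x" by (rule comm_N3S[OF v x])
  also have "\<dots> = sS (\<lambda>y. \<mu> * v y) x" by (rule sS_cong) (use ev in auto)
  also have "\<dots> = \<mu> * sS v x" by (rule sS_scale)
  finally show ?thesis .
qed

lemma N3vr: assumes v: "inU v" and ev: "\<And>y. y \<in> X \<Longrightarrow> nv 3 v y = \<mu> * v y" and x: "x \<in> X"
  shows "nv 3 (vr v) x = \<mu> * vr v x"
proof -
  have "nv 3 (vr v) x = (1 / (r0 - s0)) * nv 3 (sS v) x + (- s0 / (r0 - s0)) * nv 3 v x"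
    unfolding vr_def by (rule N3_lc)
  also have "\<dots> = (1 / (r0 - s0)) * (\<mu> * sS v x) + (- s0 / (r0 - s0)) * (\<mu> * v x)"
    using N3S_eig[OF v ev x] ev[OF x] by simp
  also have "\<dots> = \<mu> * vr v x" unfolding vr_def by (simp add: algebra_simps)
  finally show ?thesis .
qed

lemma N3vs: assumes v: "inU v" and ev: "\<And>y. y \<in> X \<Longrightarrow> nv 3 v y = \<mu> * v y" and x: "x \<in> X"
  shows "nv 3 (vs v) x = \<mu> * vs v x"
proof -
  have "nv 3 (vs v) x = (- 1 / (r0 - s0)) * nv 3 (sS v) x + (r0 / (r0 - s0)) * nv 3 v x"
    unfolding vs_def by (rule N3_lc)
  also have "\<dots> = (- 1 / (r0 - s0)) * (\<mu> * sS v x) + (r0 / (r0 - s0)) * (\<mu> * v x)"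
    using N3S_eig[OF v ev x] ev[OF x] by simp
  also have "\<dots> = \<mu> * vs v x" unfolding vs_def by (simp add: algebra_simps)
  finally show ?thesis .
qed

definition "tau = e0 + e1 * s0"

lemma TT_Vs: assumes ww: "inU ww" and Sw: "\<And>y. y \<in> X \<Longrightarrow> sS ww y = s0 * ww y" and x: "x \<in> X"
  shows "tT (tT ww) x = tau * ww x"
  unfolding E3[OF ww x] Sw[OF x] tau_def by (simp add: algebra_simps)

lemma Lam_upper: assumes "\<mu> \<in> Lam" shows "\<mu> = r0 / 2 \<or> (2 * \<mu> - s0)\<^sup>2 = tau"
proof -
  obtain v where v: "inU v" "nz v" and ev: "\<And>x. x \<in> X \<Longrightarrow> nv 3 v x = \<mu> * v x"
    using assms unfolding Lam_def by auto
  show ?thesis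
  proof (cases "nz (vr v)")
    case True
    then obtain x where x: "x \<in> X" "vr v x \<noteq> 0" unfolding nz_def by auto
    have "\<mu> * vr v x = nv 3 (vr v) x" using N3vr[OF v(1) ev x(1)] by simp
    also have "\<dots> = r0 / 2 * vr v x"
      unfolding nv3_ST using Vr_T0[OF inU_vr[OF v(1)] Svr[OF v(1)] x(1)] Svr[OF v(1) x(1)] by simp
    finally show ?thesis using x(2) by simp
  next
    case False
    obtain x where x: "x \<in> X" "v x \<noteq> 0" using v(2) nz_def by auto
    have "vr v x = 0" using False x(1) nz_def by auto
    then have wx: "vs v x \<noteq> 0" using dec[of v x] x(2) by simp
    define ww where "ww = vs v"
    have wU: "inU ww" unfolding ww_def by (rule inU_vs[OF v(1)])
    have Sw: "\<And>y. y \<in> X \<Longrightarrow> sS ww y = s0 * ww y" unfolding ww_def by (rule Svs[OF v(1)])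
    have Nw: "\<And>y. y \<in> X \<Longrightarrow> nv 3 ww y = \<mu> * ww y" unfolding ww_def by (rule N3vs[OF v(1) ev])
    have Tw: "tT ww y = (2 * \<mu> - s0) * ww y" if "y \<in> X" for y
    proof -
      have "nv 3 ww y = (sS ww y + tT ww y) / 2" by (rule nv3_ST)
      then show ?thesis using Nw[OF that] Sw[OF that] by (simp add: field_simps)
    qed
    have "tau * ww x = tT (tT ww) x" using TT_Vs[OF wU Sw x(1)] by simp
    also have "\<dots> = tT (\<lambda>y. (2 * \<mu> - s0) * ww y) x" by (rule tT_cong) (use Tw in auto)
    also have "\<dots> = (2 * \<mu> - s0) * tT ww x" by (rule tT_scale)
    also have "\<dots> = (2 * \<mu> - s0)\<^sup>2 * ww x" using Tw[OF x(1)] by (simp add: power2_eq_square)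
    finally show ?thesis using wx unfolding ww_def by simp
  qed
qed

lemma exists_w: "\<exists>ww. inU ww \<and> (\<forall>y\<in>X. sS ww y = s0 * ww y) \<and> nz (tT ww)"
proof -
  obtain v where v: "inU v" "nz (tT v)" using T_nonzero by blast
  obtain x where x: "x \<in> X" "tT v x \<noteq> 0" using v(2) nz_def by auto
  have "tT v x = tT (\<lambda>y. 1 * vr v y + 1 * vs v y) x" by (rule tT_cong) (simp add: dec[symmetric])
  also have "\<dots> = tT (vr v) x + tT (vs v) x" unfolding tT_lc by simp
  also have "tT (vr v) x = 0" using Vr_T0[OF inU_vr[OF v(1)] Svr[OF v(1)] x(1)] .
  finally have "tT (vs v) x \<noteq> 0" using x(2) by simp
  then show ?thesis using inU_vs[OF v(1)] Svs[OF v(1)] x(1) unfolding nz_def by blast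
qed

lemma tau_neg: "\<exists>t::real. t < 0 \<and> tau = of_real t"
proof -
  obtain ww where ww: "inU ww" "\<And>y. y \<in> X \<Longrightarrow> sS ww y = s0 * ww y" "nz (tT ww)" using exists_w by blast
  have tr: "cnj tau = tau" using real_consts sev_real[OF sev_s] unfolding tau_def by simp
  have nzw: "nz ww"
  proof (rule ccontr)
    assume "\<not> nz ww"
    then have "\<And>y. y \<in> X \<Longrightarrow> ww y = 0 * ww y" unfolding nz_def by auto
    then have "tT ww y = tT (\<lambda>y. 0 * ww y) y" for y by (rule tT_cong)
    then have "tT ww y = 0" for y unfolding tT_scale by simp
    then show False using ww(3) unfolding nz_def by simp
  qed
  define A where "A = (\<Sum>x\<in>X. (cmod (tT ww x))\<^sup>2)"
  define B where "B = (\<Sum>x\<in>X. (cmod (ww x))\<^sup>2)"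
  have A: "A > 0" unfolding A_def by (rule nz_pos[OF ww(3)])
  have B: "B > 0" unfolding B_def by (rule nz_pos[OF nzw])
  have "of_real A = ip (tT ww) (tT ww)" unfolding A_def ip_self ..
  also have "\<dots> = - ip ww (tT (tT ww))" by (rule ip_T)
  also have "ip ww (tT (tT ww)) = ip ww (\<lambda>y. tau * ww y)" by (rule ip_cong) (use TT_Vs[OF ww(1) ww(2)] in auto)
  also have "\<dots> = tau * of_real B" unfolding ip_scale_right tr B_def ip_self ..
  finally have "of_real A = - tau * of_real B" by simp
  then have "tau = of_real (- A / B)" using B by (simp add: field_simps)
  moreover have "- A / B < 0" using A B by simp
  ultimately show ?thesis by blast
qed

lemma eig_c: assumes ww: "inU ww" "\<And>y. y \<in> X \<Longrightarrow> sS ww y = s0 * ww y"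
  and c: "c\<^sup>2 = tau" and u: "u = (\<lambda>y. 1 * tT ww y + c * ww y)" and nzu: "nz u"
  shows "(s0 + c) / 2 \<in> Lam"
proof -
  have uU: "inU u" unfolding u by (intro inU_lc inU_tT ww)
  have Tu: "tT u x = c * u x" if x: "x \<in> X" for x
  proof -
    have "tT u x = tT (tT ww) x + c * tT ww x" unfolding u tT_lc by simp
    also have "tT (tT ww) x = tau * ww x" by (rule TT_Vs[OF ww x])
    also have "tau * ww x + c * tT ww x = c * u x" unfolding u c[symmetric] by (simp add: algebra_simps power2_eq_square)
    finally show ?thesis .
  qed
  have Su: "sS u x = s0 * u x" if x: "x \<in> X" for x
  proof -
    have "sS u x = sS (tT ww) x + c * sS ww x" unfolding u sS_lc by simp
    also have "sS (tT ww) x = tT (sS ww) x" by (rule comm_ST[OF ww(1) x])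
    also have "\<dots> = tT (\<lambda>y. s0 * ww y) x" by (rule tT_cong) (use ww(2) in auto)
    also have "\<dots> = s0 * tT ww x" by (rule tT_scale)
    finally show ?thesis unfolding ww(2)[OF x] u by (simp add: algebra_simps)
  qed
  have "nv 3 u x = (s0 + c) / 2 * u x" if "x \<in> X" for x
    unfolding nv3_ST Tu[OF that] Su[OF that] by (simp add: field_simps)
  then show ?thesis unfolding Lam_def using uU nzu by blast
qed

lemma card_Lam: "card Lam = 3"
proof -
  obtain t where t: "t < 0" "tau = of_real t" using tau_neg by blast
  define \<sigma> where "\<sigma> = \<i> * of_real (sqrt (- t))"
  have a2: "(sqrt (- t))\<^sup>2 = - t" using t(1) by simp
  have "\<sigma>\<^sup>2 = \<i>\<^sup>2 * (of_real (sqrt (- t)))\<^sup>2" unfolding \<sigma>_def by (rule power_mult_distrib)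
  also have "\<dots> = - of_real ((sqrt (- t))\<^sup>2)" by (simp only: of_real_power power2_i) simp
  also have "\<dots> = tau" unfolding a2 t(2) by simp
  finally have sig2: "\<sigma>\<^sup>2 = tau" .
  have sig2': "(- \<sigma>)\<^sup>2 = tau" using sig2 by simp
  have sqpos: "sqrt (- t) > 0" using t(1) by simp
  have s0r: "cnj s0 = s0" using sev_real[OF sev_s] .
  have r0r: "cnj r0 = r0" using sev_real[OF sev_r] .
  have csig: "cnj \<sigma> = - \<sigma>" unfolding \<sigma>_def by simp
  obtain ww where ww: "inU ww" "\<And>y. y \<in> X \<Longrightarrow> sS ww y = s0 * ww y" "nz (tT ww)" using exists_w by blast
  have nzw: "nz ww"
  proof (rule ccontr)
    assume "\<not> nz ww"
    then have "\<And>y. y \<in> X \<Longrightarrow> ww y = 0 * ww y" unfolding nz_def by auto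
    then have "tT ww y = tT (\<lambda>y. 0 * ww y) y" for y by (rule tT_cong)
    then have "tT ww y = 0" for y unfolding tT_scale by simp
    then show False using ww(3) unfolding nz_def by simp
  qed
  define up where "up = (\<lambda>y. 1 * tT ww y + \<sigma> * ww y)"
  define um where "um = (\<lambda>y. 1 * tT ww y + (- \<sigma>) * ww y)"
  have cj1: "cnj ((s0 + \<sigma>) / 2) = (s0 - \<sigma>) / 2" using s0r csig by simp
  have cj2: "cnj ((s0 + - \<sigma>) / 2) = (s0 + \<sigma>) / 2" using s0r csig by simp
  have both: "(s0 + \<sigma>) / 2 \<in> Lam \<and> (s0 - \<sigma>) / 2 \<in> Lam"
  proof (cases "nz up")
    case True
    have "(s0 + \<sigma>) / 2 \<in> Lam" by (rule eig_c[OF ww(1) ww(2) sig2 up_def True])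
    then show ?thesis using Lam_conj cj1 by metis
  next
    case False
    have "nz um"
    proof (rule ccontr)
      assume "\<not> nz um"
      obtain x where x: "x \<in> X" "ww x \<noteq> 0" using nzw nz_def by auto
      have "up x - um x = 2 * \<sigma> * ww x" unfolding up_def um_def by simp
      moreover have "up x = 0" "um x = 0" using False \<open>\<not> nz um\<close> x(1) unfolding nz_def by auto
      moreover have "\<sigma> \<noteq> 0" unfolding \<sigma>_def using sqpos by simp
      ultimately show False using x(2) by simp
    qed
    have "(s0 + - \<sigma>) / 2 \<in> Lam" by (rule eig_c[OF ww(1) ww(2) sig2' um_def \<open>nz um\<close>])
    then show ?thesis using Lam_conj cj2 by (metis diff_conv_add_uminus)
  qed
  have LE: "Lam = {r0 / 2, (s0 + \<sigma>) / 2, (s0 - \<sigma>) / 2}"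
  proof (intro equalityI subsetI)
    fix \<mu> assume "\<mu> \<in> Lam"
    then have "\<mu> = r0 / 2 \<or> (2 * \<mu> - s0)\<^sup>2 = \<sigma>\<^sup>2" using Lam_upper sig2 by simp
    then have "\<mu> = r0 / 2 \<or> 2 * \<mu> - s0 = \<sigma> \<or> 2 * \<mu> - s0 = - \<sigma>"
      by (metis power2_eq_iff)
    then show "\<mu> \<in> {r0 / 2, (s0 + \<sigma>) / 2, (s0 - \<sigma>) / 2}" by (auto simp: field_simps)
  next
    fix \<mu> assume "\<mu> \<in> {r0 / 2, (s0 + \<sigma>) / 2, (s0 - \<sigma>) / 2}"
    then have "\<mu> = r0 / 2 \<or> \<mu> = (s0 + \<sigma>) / 2 \<or> \<mu> = (s0 - \<sigma>) / 2" by simp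
    then show "\<mu> \<in> Lam" using r_Lam both by blast
  qed
  moreover have "Im (r0 / 2) = 0"
  proof -
    have "Im (cnj r0) = Im r0" using r0r by simp
    then have "Im r0 = 0" by simp
    then show ?thesis by simp
  qed
  moreover have "Im (s0) = 0"
  proof -
    have "Im (cnj s0) = Im s0" using s0r by simp
    then show "Im s0 = 0" by simp
  qed
  moreover have "Im \<sigma> = sqrt (- t)" unfolding \<sigma>_def by simp
  ultimately have I: "Im (r0 / 2) = 0" "Im ((s0 + \<sigma>) / 2) = sqrt (- t) / 2" "Im ((s0 - \<sigma>) / 2) = - sqrt (- t) / 2"
    by simp_all
  moreover have "r0 / 2 \<noteq> (s0 + \<sigma>) / 2"
  proof
    assume "r0 / 2 = (s0 + \<sigma>) / 2"
    then have "Im (r0 / 2) = Im ((s0 + \<sigma>) / 2)" by simp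
    then show False using I sqpos by simp
  qed
  moreover have "r0 / 2 \<noteq> (s0 - \<sigma>) / 2"
  proof
    assume "r0 / 2 = (s0 - \<sigma>) / 2"
    then have "Im (r0 / 2) = Im ((s0 - \<sigma>) / 2)" by simp
    then show False using I sqpos by simp
  qed
  moreover have "(s0 + \<sigma>) / 2 \<noteq> (s0 - \<sigma>) / 2"
  proof
    assume "(s0 + \<sigma>) / 2 = (s0 - \<sigma>) / 2"
    then have "Im ((s0 + \<sigma>) / 2) = Im ((s0 - \<sigma>) / 2)" by simp
    then show False using I sqpos by simp
  qed
  ultimately show ?thesis unfolding LE by simp
qed

end

end

context pf begin

lemma card_Lam3: "card Lam = 3"
proof -
  obtain r0 s0 where rs: "r0 \<noteq> s0" "sev r0" "sev s0" "s0 = gam"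
    "\<And>v x. inU v \<Longrightarrow> x \<in> X \<Longrightarrow> sS (sS v) x = (r0 + s0) * sS v x - r0 * s0 * v x"
    using rs_exist by blast
  show ?thesis by (rule card_Lam[OF rs])
qed

lemma Lam_fin: "finite Lam" using card_Lam3 by (metis card.infinite zero_neq_numeral)

lemma mM: "(\<Sum>y\<in>X. if (x,y) \<in> R i \<union> R 3 then v y else 0) = nv i v x + nv 3 v x"
proof -
  have "(\<Sum>y\<in>X. if (x,y) \<in> R i \<union> R 3 then v y else 0) = (\<Sum>y\<in>X. adj i x y * v y + adj 3 x y * v y)"
  proof (rule sum.cong[OF refl])
    fix y assume "y \<in> X"
    have "\<not> ((x,y) \<in> R i \<and> (x,y) \<in> R 3)" using disj[of i 3 x y] ij by auto
    then show "(if (x,y) \<in> R i \<union> R 3 then v y else 0) = adj i x y * v y + adj 3 x y * v y"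
      by (auto simp: adj_def)
  qed
  then show ?thesis unfolding nv_def by (simp add: sum.distrib)
qed

lemma cardX: "card X = card Cs * w"
proof -
  have "card X = card (\<Union>Cs)" using CsU by simp
  also have "\<dots> = (\<Sum>C\<in>Cs. card C)"
    by (rule card_Union_disjoint) (use finC Csdisj in \<open>auto simp: pairwise_def disjnt_def\<close>)
  also have "\<dots> = card Cs * w" using Cscard by simp
  finally show ?thesis .
qed

lemma w_pos: "w > 0"
proof -
  obtain C where "C \<in> Cs" using Cs2 by (metis card.empty ex_in_conv not_numeral_le_zero)
  then show ?thesis using Cscard Csne finC by (metis card_gt_0_iff)
qed

lemma w_big: "2 * K + 1 \<le> w"
proof -
  obtain x where x: "x \<in> X" using Xne by auto
  obtain C where C: "C \<in> Cs" "x \<in> C" using comp_ex[OF x] by auto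
  define N3 where "N3 = {y\<in>X. (x,y) \<in> R 3}"
  define N4 where "N4 = {y\<in>X. (x,y) \<in> R 4}"
  have sub: "insert x (N3 \<union> N4) \<subseteq> C"
    using C R3C'[OF C(1) C(2)] R4C'[OF C(1) C(2)] unfolding N3_def N4_def by auto
  have d: "N3 \<inter> N4 = {}" unfolding N3_def N4_def using disj[of 3 4 x] by auto
  have x0: "(x,x) \<in> R 0" using x R0 by auto
  have xn: "x \<notin> N3 \<union> N4" unfolding N3_def N4_def using disj[of 0 3 x x] disj[of 0 4 x x] x0 by auto
  have f: "finite N3" "finite N4" unfolding N3_def N4_def using finX by auto
  have "card (insert x (N3 \<union> N4)) = 1 + (K + K)"
    using f d xn deg3[OF x] deg4[OF x] unfolding N3_def N4_def by (simp add: card_Un_disjoint)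
  moreover have "card (insert x (N3 \<union> N4)) \<le> card C" using card_mono[OF finC[OF C(1)] sub] .
  ultimately show ?thesis using Cscard[OF C(1)] by simp
qed

definition "alpha = (of_nat (card X) - of_nat w + of_nat K :: complex)"
definition "beta = (of_nat K - of_nat w :: complex)"

lemma nv3_const: assumes C: "C \<in> Cs" "x \<in> C" and f: "\<And>y. y \<in> C \<Longrightarrow> f y = c"
  shows "nv 3 f x = of_nat K * c"
proof -
  have x: "x \<in> X" using C CX by auto
  have "nv 3 f x = (\<Sum>y\<in>X. adj 3 x y * c)"
    unfolding nv_def by (rule sum.cong) (use R3C'[OF C] f in \<open>auto simp: adj_def\<close>)
  also have "\<dots> = of_nat K * c" using row3[OF x] by (simp add: sum_distrib_right[symmetric])
  finally show ?thesis .
qed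

lemma EM: "adj_eigenvalues X (R i \<union> R 3) = Lam \<union> {alpha, beta}"
proof (intro equalityI subsetI)
  fix \<mu> assume "\<mu> \<in> adj_eigenvalues X (R i \<union> R 3)"
  then obtain v where v: "\<exists>x\<in>X. v x \<noteq> 0" and ev: "\<And>x. x \<in> X \<Longrightarrow> nv i v x + nv 3 v x = \<mu> * v x"
    unfolding adj_eigenvalues_def mM by auto
  define tot where "tot = (\<Sum>y\<in>X. v y)"
  define cC where "cC C = (\<Sum>y\<in>C. v y)" for C
  have blk: "\<mu> * cC C = of_nat w * tot - of_nat w * cC C + of_nat K * cC C" if C: "C \<in> Cs" for C
  proof -
    have "\<mu> * cC C = (\<Sum>x\<in>C. nv i v x + nv 3 v x)" unfolding cC_def sum_distrib_left
      by (rule sum.cong) (use ev CX[OF C] in auto)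
    also have "\<dots> = (\<Sum>x\<in>C. tot - cC C) + (\<Sum>x\<in>C. nv 3 v x)"
      unfolding sum.distrib tot_def cC_def using nvi[OF C] by simp
    also have "\<dots> = of_nat w * tot - of_nat w * cC C + of_nat K * cC C"
      using colsum[OF C, of 3 v] Cscard[OF C] unfolding cC_def by (simp add: algebra_simps)
    finally show ?thesis .
  qed
  show "\<mu> \<in> Lam \<union> {alpha, beta}"
  proof (cases "\<forall>C\<in>Cs. cC C = 0")
    case True
    then have U: "inU v" unfolding inU_def cC_def by simp
    have "nv 3 v x = \<mu> * v x" if "x \<in> X" for x using ev[OF that] nvi_U[OF U that] by simp
    then have "\<mu> \<in> Lam" unfolding Lam_def using U v nz_def by blast
    then show ?thesis by simp
  next
    case False
    then obtain C0 where C0: "C0 \<in> Cs" "cC C0 \<noteq> 0" by auto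
    have tot: "tot = (\<Sum>C\<in>Cs. cC C)" unfolding tot_def cC_def by (rule sumX)
    show ?thesis
    proof (cases "tot = 0")
      case True
      have "\<mu> * cC C0 = beta * cC C0" using blk[OF C0(1)] True unfolding beta_def by (simp add: algebra_simps)
      then show ?thesis using C0(2) by simp
    next
      case False
      have "\<mu> * tot = (\<Sum>C\<in>Cs. \<mu> * cC C)" unfolding tot sum_distrib_left ..
      also have "\<dots> = (\<Sum>C\<in>Cs. of_nat w * tot - of_nat w * cC C + of_nat K * cC C)"
        using blk by (rule sum.cong[OF refl])
      also have "\<dots> = of_nat (card Cs) * of_nat w * tot - of_nat w * tot + of_nat K * tot"
        unfolding tot by (simp add: sum.distrib sum_subtractf sum_distrib_left[symmetric])
      also have "\<dots> = alpha * tot" unfolding alpha_def cardX by (simp add: algebra_simps)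
      finally show ?thesis using False by simp
    qed
  qed
next
  fix \<mu> assume "\<mu> \<in> Lam \<union> {alpha, beta}"
  then consider "\<mu> \<in> Lam" | "\<mu> = alpha" | "\<mu> = beta" by auto
  then show "\<mu> \<in> adj_eigenvalues X (R i \<union> R 3)"
  proof cases
    case 1
    then obtain v where v: "inU v" "nz v" "\<And>x. x \<in> X \<Longrightarrow> nv 3 v x = \<mu> * v x" unfolding Lam_def by auto
    show ?thesis unfolding adj_eigenvalues_def mM using v nvi_U nz_def by auto
  next
    case 2
    have h: "nv i (\<lambda>_. 1) x + nv 3 (\<lambda>_. 1) x = \<mu> * 1" if x: "x \<in> X" for x
    proof -
      obtain C where C: "C \<in> Cs" "x \<in> C" using comp_ex[OF x] by auto
      have "nv i (\<lambda>_. 1) x = of_nat (card X) - of_nat w" using nvi[OF C, of "\<lambda>_. 1"] Cscard[OF C(1)] by simp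
      moreover have "nv 3 (\<lambda>_. 1) x = of_nat K" using nv3_const[OF C, of "\<lambda>_. 1" 1] by simp
      ultimately show ?thesis using 2 unfolding alpha_def by simp
    qed
    have "(\<exists>x\<in>X. (1::complex) \<noteq> 0) \<and> (\<forall>x\<in>X. nv i (\<lambda>_. 1) x + nv 3 (\<lambda>_. 1) x = \<mu> * 1)"
      using Xne h by auto
    then show ?thesis unfolding adj_eigenvalues_def mM
      by (intro CollectI exI[of _ "\<lambda>_. 1"]) assumption
  next
    case 3
    obtain C1 C2 where C12: "C1 \<in> Cs" "C2 \<in> Cs" "C1 \<noteq> C2"
    proof -
      have "\<not> (\<forall>C1\<in>Cs. \<forall>C2\<in>Cs. C1 = C2)"
      proof
        assume "\<forall>C1\<in>Cs. \<forall>C2\<in>Cs. C1 = C2"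
        then have "card Cs \<le> Suc 0" by (simp add: card_le_Suc0_iff_eq[OF finCs])
        then show False using Cs2 by simp
      qed
      then show ?thesis using that by blast
    qed
    define f where "f C = (if C = C1 then 1 else 0) - (if C = C2 then 1 else (0::complex))" for C
    define v where "v y = (if y \<in> C1 then 1 else 0) - (if y \<in> C2 then 1 else (0::complex))" for y
    have vC: "v y = f C" if "C \<in> Cs" "y \<in> C" for C y
    proof -
      have 1: "y \<in> C1 \<longleftrightarrow> C = C1" using comp_uniq[OF that(1) C12(1) that(2)] that(2) by blast
      have 2: "y \<in> C2 \<longleftrightarrow> C = C2" using comp_uniq[OF that(1) C12(2) that(2)] that(2) by blast
      show ?thesis unfolding v_def f_def 1 2 ..
    qed
    have cC: "(\<Sum>y\<in>C. v y) = of_nat w * f C" if C: "C \<in> Cs" for C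
      using vC[OF C] Cscard[OF C] by simp
    have tot: "(\<Sum>y\<in>X. v y) = 0"
    proof -
      have "(\<Sum>y\<in>X. v y) = (\<Sum>C\<in>Cs. of_nat w * f C)" unfolding sumX using cC by simp
      also have "\<dots> = of_nat w * (\<Sum>C\<in>Cs. f C)" by (simp add: sum_distrib_left)
      also have "(\<Sum>C\<in>Cs. f C) = 0" unfolding f_def using C12 finCs by (simp add: sum_subtractf)
      finally show ?thesis by simp
    qed
    have "nv i v x + nv 3 v x = \<mu> * v x" if x: "x \<in> X" for x
    proof -
      obtain C where C: "C \<in> Cs" "x \<in> C" using comp_ex[OF x] by auto
      have "nv i v x = - of_nat w * f C" using nvi[OF C, of v] tot cC[OF C(1)] by simp
      moreover have "nv 3 v x = of_nat K * f C" using nv3_const[OF C, of v "f C"] vC[OF C(1)] by simp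
      ultimately show ?thesis unfolding 3 beta_def vC[OF C] by (simp add: algebra_simps)
    qed
    moreover have "\<exists>x\<in>X. v x \<noteq> 0"
    proof -
      obtain x where x: "x \<in> C1" using Csne[OF C12(1)] by auto
      have v1: "v x = 1" using vC[OF C12(1) x] C12(3) unfolding f_def by simp
      have xX: "x \<in> X" using x CX[OF C12(1)] by blast
      show ?thesis by (rule bexI[OF _ xX]) (simp add: v1)
    qed
    ultimately show ?thesis unfolding adj_eigenvalues_def mM by auto
  qed
qed

lemma card_EM: "card (adj_eigenvalues X (R i \<union> R 3)) = 5"
proof -
  have wb: "2 * K + 1 \<le> w" by (rule w_big)
  have cX: "card X \<ge> 2 * w" using cardX Cs2 by simp
  have na: "alpha \<notin> Lam"
  proof
    assume "alpha \<in> Lam"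
    then have "cmod alpha \<le> of_nat K" by (rule Lam_bound)
    moreover have e: "alpha = of_real (real (card X) - real w + real K)" unfolding alpha_def by simp
    have "cmod alpha = \<bar>real (card X) - real w + real K\<bar>" unfolding e by (rule norm_of_real)
    moreover have "real (card X) - real w + real K > real K" using cX w_pos by simp
    ultimately show False by linarith
  qed
  have nb: "beta \<notin> Lam"
  proof
    assume "beta \<in> Lam"
    then have "cmod beta \<le> of_nat K" by (rule Lam_bound)
    moreover have e: "beta = of_real (real K - real w)" unfolding beta_def by simp
    have "cmod beta = \<bar>real K - real w\<bar>" unfolding e by (rule norm_of_real)
    moreover have "real w - real K > real K" using wb by simp
    ultimately show False by linarith
  qed
  have ab: "alpha \<noteq> beta"
  proof
    assume "alpha = beta"
    then have "(of_nat (card X) :: complex) = 0" unfolding alpha_def beta_def by (simp add: algebra_simps)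
    then show False using finX Xne by simp
  qed
  show ?thesis unfolding EM using na nb ab Lam_fin card_Lam3 by simp
qed

end

lemma closure_pow:
  fixes X :: "'a set" and R :: "nat \<Rightarrow> ('a \<times> 'a) set" and P :: "nat \<Rightarrow> nat \<Rightarrow> nat \<Rightarrow> nat"
  assumes finX: "finite X"
  and Rsub: "\<And>l. l \<le> 4 \<Longrightarrow> R l \<subseteq> X \<times> X"
  and cover: "\<And>x y. x \<in> X \<Longrightarrow> y \<in> X \<Longrightarrow> \<exists>l\<le>4. (x,y) \<in> R l"
  and disj: "\<And>l m x y. l \<le> 4 \<Longrightarrow> m \<le> 4 \<Longrightarrow> (x,y) \<in> R l \<Longrightarrow> (x,y) \<in> R m \<Longrightarrow> l = m"
  and R0: "R 0 = Id_on X"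
  and Pdef: "\<And>a b l x y. a \<le> 4 \<Longrightarrow> b \<le> 4 \<Longrightarrow> l \<le> 4 \<Longrightarrow> (x,y) \<in> R l \<Longrightarrow>
       card {z\<in>X. (x,z) \<in> R a \<and> (z,y) \<in> R b} = P a b l"
  shows "\<forall>l x y x' y'. l \<le> 4 \<longrightarrow> (x,y) \<in> R l \<longrightarrow> (x,y) \<in> (R 3 \<union> R 4) ^^ n \<longrightarrow> (x',y') \<in> R l
          \<longrightarrow> (x',y') \<in> (R 3 \<union> R 4) ^^ n"
proof (induction n)
  case 0
  show ?case
  proof (intro allI impI)
    fix l x y x' y' assume l: "l \<le> 4" and xy: "(x,y) \<in> R l" and p: "(x,y) \<in> (R 3 \<union> R 4) ^^ 0"
      and xy': "(x',y') \<in> R l"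
    have "x = y" using p by simp
    have "x \<in> X" using xy Rsub[OF l] by auto
    then have "(x,y) \<in> R 0" using R0 \<open>x = y\<close> by auto
    then have "l = 0" using disj[of 0 l x y] l xy by simp
    then have "x' = y'" using xy' R0 by auto
    then show "(x',y') \<in> (R 3 \<union> R 4) ^^ 0" by simp
  qed
next
  case (Suc n)
  show ?case
  proof (intro allI impI)
    fix l x y x' y' assume l: "l \<le> 4" and xy: "(x,y) \<in> R l" and p: "(x,y) \<in> (R 3 \<union> R 4) ^^ Suc n"
      and xy': "(x',y') \<in> R l"
    obtain z where z1: "(x,z) \<in> (R 3 \<union> R 4) ^^ n" and z2: "(z,y) \<in> R 3 \<union> R 4" using p by auto
    obtain e where e: "e \<in> {3,4}" "(z,y) \<in> R e" using z2 by auto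
    have e4: "e \<le> 4" using e by auto
    have xX: "x \<in> X" using xy Rsub[OF l] by auto
    have zX: "z \<in> X" using e Rsub[OF e4] by auto
    obtain m where m: "m \<le> 4" "(x,z) \<in> R m" using cover[OF xX zX] by blast
    have "z \<in> {z\<in>X. (x,z) \<in> R m \<and> (z,y) \<in> R e}" using zX m e by auto
    then have "card {z\<in>X. (x,z) \<in> R m \<and> (z,y) \<in> R e} \<noteq> 0" using finX by auto
    then have "P m e l \<noteq> 0" using Pdef[OF m(1) e4 l xy] by simp
    then have "card {z\<in>X. (x',z) \<in> R m \<and> (z,y') \<in> R e} \<noteq> 0" using Pdef[OF m(1) e4 l xy'] by simp
    then obtain z' where z': "(x',z') \<in> R m" "(z',y') \<in> R e" by (metis (no_types, lifting) card.empty empty_Collect_eq)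
    have "(x',z') \<in> (R 3 \<union> R 4) ^^ n" using Suc.IH m(1) m(2) z1 z'(1) by blast
    moreover have "(z',y') \<in> R 3 \<union> R 4" using z'(2) e by auto
    ultimately show "(x',y') \<in> (R 3 \<union> R 4) ^^ Suc n" by auto
  qed
qed

theorem proposition4p7:
  fixes X :: "'a set" and R :: "nat \<Rightarrow> ('a \<times> 'a) set"
    and Cs :: "'a set set" and N k w :: nat and r s :: real
  assumes scheme: "assoc_scheme X 4 R"
    and sym1: "(R 1)\<inverse> = R 1" and sym2: "(R 2)\<inverse> = R 2" and tr34: "(R 3)\<inverse> = R 4"
    and union: "disjoint_union_of X (R 3 \<union> R 4) Cs"
    and N: "card Cs = N" "N > 1"
    and comps: "\<forall>C\<in>Cs. graph_connected C ((R 3 \<union> R 4) \<inter> C \<times> C)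
                  \<and> srg_valency C ((R 3 \<union> R 4) \<inter> C \<times> C) k
                  \<and> adj_eigenvalues C ((R 3 \<union> R 4) \<inter> C \<times> C) = complex_of_real ` {real k, r, s}
                  \<and> card C = w"
    and rk: "r \<noteq> real k" and sk: "s \<noteq> real k"
  shows "\<exists>i\<in>{1, 2, 3::nat}. card (adj_eigenvalues X (R i \<union> R 3)) = 5"
proof -
  note S = scheme[unfolded assoc_scheme_def]
  have finX: "finite X" using S by (rule conjunct1)
  have S2: "\<forall>i\<le>4. R i \<noteq> {} \<and> R i \<subseteq> X \<times> X" using S[THEN conjunct2] by (rule conjunct1)
  have UN: "(\<Union>l\<in>{..4}. R l) = X \<times> X" using S[THEN conjunct2, THEN conjunct2] by (rule conjunct1)
  have S4: "\<forall>i\<le>4. \<forall>j\<le>4. i \<noteq> j \<longrightarrow> R i \<inter> R j = {}"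
    using S[THEN conjunct2, THEN conjunct2, THEN conjunct2] by (rule conjunct1)
  have R0: "R 0 = Id_on X"
    using S[THEN conjunct2, THEN conjunct2, THEN conjunct2, THEN conjunct2] by (rule conjunct1)
  have S7: "\<forall>i\<le>4. \<forall>j\<le>4. \<forall>l\<le>4. \<exists>p::nat. \<forall>(x, y)\<in>R l.
        card {z\<in>X. (x, z) \<in> R i \<and> (z, y) \<in> R j} = p"
    using S[THEN conjunct2, THEN conjunct2, THEN conjunct2, THEN conjunct2, THEN conjunct2] by (rule conjunct2)
  have Rne: "\<And>l. l \<le> 4 \<Longrightarrow> R l \<noteq> {}" using S2 by simp
  have Rsub: "\<And>l. l \<le> 4 \<Longrightarrow> R l \<subseteq> X \<times> X" using S2 by simp
  have disj0: "\<And>l m. l \<le> 4 \<Longrightarrow> m \<le> 4 \<Longrightarrow> l \<noteq> m \<Longrightarrow> R l \<inter> R m = {}" using S4 by simp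
  have Pex: "\<And>a b l. a \<le> 4 \<Longrightarrow> b \<le> 4 \<Longrightarrow> l \<le> 4 \<Longrightarrow> \<exists>p::nat. \<forall>(x, y)\<in>R l.
        card {z\<in>X. (x, z) \<in> R a \<and> (z, y) \<in> R b} = p"
    using S7 by blast
  define P where "P a b l = (SOME p. \<forall>(x, y)\<in>R l. card {z\<in>X. (x, z) \<in> R a \<and> (z, y) \<in> R b} = p)" for a b l
  have Pdef: "card {z\<in>X. (x,z) \<in> R a \<and> (z,y) \<in> R b} = P a b l"
    if "a \<le> 4" "b \<le> 4" "l \<le> 4" "(x,y) \<in> R l" for a b l x y
  proof -
    have "\<forall>(x, y)\<in>R l. card {z\<in>X. (x, z) \<in> R a \<and> (z, y) \<in> R b} = P a b l"
      unfolding P_def by (rule someI_ex[OF Pex[OF that(1-3)]])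
    then show ?thesis using that(4) by auto
  qed
  have cover: "\<exists>l\<le>4. (x,y) \<in> R l" if "x \<in> X" "y \<in> X" for x y
    using UN that by auto
  have disj: "l = m" if "l \<le> 4" "m \<le> 4" "(x,y) \<in> R l" "(x,y) \<in> R m" for l m x y
    using disj0[OF that(1,2)] that(3,4) by blast
  have CsU: "\<Union>Cs = X" and Csne: "\<And>C. C \<in> Cs \<Longrightarrow> C \<noteq> {}"
    and Csdisj: "\<And>C D. C \<in> Cs \<Longrightarrow> D \<in> Cs \<Longrightarrow> C \<noteq> D \<Longrightarrow> C \<inter> D = {}"
    and Eblk: "R 3 \<union> R 4 = (\<Union>C\<in>Cs. (R 3 \<union> R 4) \<inter> C \<times> C)"
    using union unfolding disjoint_union_of_def by blast+
  define E where "E = R 3 \<union> R 4"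
  define W where "W = {(x,y). \<exists>C\<in>Cs. x \<in> C \<and> y \<in> C}"
  have EW: "E \<subseteq> W" unfolding E_def W_def using Eblk by blast
  have R3C: "\<exists>C\<in>Cs. x \<in> C \<and> y \<in> C" if "(x,y) \<in> R 3" for x y
    using that EW unfolding E_def W_def by blast
  have uniq: "C = D" if "C \<in> Cs" "D \<in> Cs" "x \<in> C" "x \<in> D" for C D x
    using Csdisj that by blast
  have transW: "(x,z) \<in> W" if "(x,y) \<in> W" "(y,z) \<in> W" for x y z
    using that uniq unfolding W_def by blast
  have rtW: "(x,y) \<in> W" if "(x,y) \<in> E\<^sup>*" "x \<in> X" for x y
    using that(1)
  proof (induction rule: rtrancl_induct)
    case base
    then show ?case using that(2) CsU unfolding W_def by blast
  next
    case (step y z)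
    then show ?case using EW transW by blast
  qed
  have clos: "R l \<subseteq> W" if l: "l \<le> 4" and xy: "(x,y) \<in> R l" and xyW: "(x,y) \<in> W" for l x y
  proof
    fix p assume p: "p \<in> R l"
    obtain x' y' where p': "p = (x',y')" by (cases p)
    obtain C where C: "C \<in> Cs" "x \<in> C" "y \<in> C" using xyW unfolding W_def by blast
    have "graph_connected C ((R 3 \<union> R 4) \<inter> C \<times> C)" using comps C(1) by blast
    then have "(x,y) \<in> ((R 3 \<union> R 4) \<inter> C \<times> C \<inter> C \<times> C)\<^sup>*" unfolding graph_connected_def using C by blast
    moreover have "((R 3 \<union> R 4) \<inter> C \<times> C \<inter> C \<times> C)\<^sup>* \<subseteq> E\<^sup>*" unfolding E_def by (rule rtrancl_mono) blast
    ultimately have "(x,y) \<in> E\<^sup>*" by blast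
    then obtain n where n: "(x,y) \<in> E ^^ n" using rtrancl_power by blast
    have H: "\<forall>l x y x' y'. l \<le> 4 \<longrightarrow> (x,y) \<in> R l \<longrightarrow> (x,y) \<in> (R 3 \<union> R 4) ^^ n \<longrightarrow> (x',y') \<in> R l
          \<longrightarrow> (x',y') \<in> (R 3 \<union> R 4) ^^ n"
      by (rule closure_pow[where X=X and R=R and P=P and n=n]) (fact finX Rsub cover disj R0 Pdef)+
    have "(x',y') \<in> E ^^ n"
      using H l xy n p p' unfolding E_def by blast
    then have "(x',y') \<in> E\<^sup>*" by (rule relpow_imp_rtrancl)
    moreover have "x' \<in> X" using p p' Rsub[OF l] by auto
    ultimately show "p \<in> W" using rtW p' by simp
  qed
  have R0W: "R 0 \<subseteq> W" using R0 CsU unfolding W_def by auto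
  have R3W: "R 3 \<subseteq> W" and R4W: "R 4 \<subseteq> W" using EW unfolding E_def by auto
  have finCs: "finite Cs" using finX CsU by (metis finite_UnionD)
  obtain C1 C2 where C12: "C1 \<in> Cs" "C2 \<in> Cs" "C1 \<noteq> C2"
  proof -
    have "\<not> (\<forall>C1\<in>Cs. \<forall>C2\<in>Cs. C1 = C2)"
    proof
      assume "\<forall>C1\<in>Cs. \<forall>C2\<in>Cs. C1 = C2"
      then have "card Cs \<le> Suc 0" by (simp add: card_le_Suc0_iff_eq[OF finCs])
      then show False using N by simp
    qed
    then show ?thesis using that by blast
  qed
  have srg: "srg_valency C1 (E \<inter> C1 \<times> C1) k" using comps C12(1) unfolding E_def by blast
  obtain x0 y0 where xy0: "x0 \<in> C1" "y0 \<in> C1" "x0 \<noteq> y0" "(x0,y0) \<notin> E \<inter> C1 \<times> C1"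
    using srg unfolding srg_valency_def by blast
  have C1X: "C1 \<subseteq> X" and C2X: "C2 \<subseteq> X" using CsU C12 by auto
  obtain j where j: "j \<le> 4" "(x0,y0) \<in> R j" using cover xy0 C1X by blast
  have j0: "j \<noteq> 0"
  proof
    assume "j = 0"
    then have "(x0,y0) \<in> Id_on X" using j(2) R0 by simp
    then show False using xy0(3) by auto
  qed
  have j34: "j \<noteq> 3" "j \<noteq> 4" using j xy0 unfolding E_def by auto
  have j12: "j \<in> {1,2}" using j(1) j0 j34 by auto
  have RjW: "R j \<subseteq> W" using clos[OF j(1) j(2)] xy0 unfolding W_def using C12(1) by blast
  obtain x1 where x1: "x1 \<in> C1" using Csne[OF C12(1)] by auto
  obtain y1 where y1: "y1 \<in> C2" using Csne[OF C12(2)] by auto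
  have nW: "(x1,y1) \<notin> W" unfolding W_def using uniq C12 x1 y1 by blast
  obtain i where i: "i \<le> 4" "(x1,y1) \<in> R i" using cover x1 y1 C1X C2X by blast
  have i_ne: "i \<noteq> 0" "i \<noteq> 3" "i \<noteq> 4" "i \<noteq> j"
  proof -
    show "i \<noteq> 0"
    proof
      assume "i = 0"
      then have "(x1,y1) \<in> R 0" using i(2) by simp
      then show False using nW R0W by blast
    qed
    show "i \<noteq> 3"
    proof
      assume "i = 3"
      then have "(x1,y1) \<in> R 3" using i(2) by simp
      then show False using nW R3W by blast
    qed
    show "i \<noteq> 4"
    proof
      assume "i = 4"
      then have "(x1,y1) \<in> R 4" using i(2) by simp
      then show False using nW R4W by blast
    qed
    show "i \<noteq> j"
    proof
      assume "i = j"
      then have "(x1,y1) \<in> R j" using i(2) by simp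
      then show False using nW RjW by blast
    qed
  qed
  have i12: "i \<in> {1,2}" using i(1) i_ne by auto
  have RiW: "R i \<inter> W = {}"
  proof (rule ccontr)
    assume "R i \<inter> W \<noteq> {}"
    then obtain a b where "(a,b) \<in> R i" "(a,b) \<in> W" by auto
    then have "R i \<subseteq> W" using clos[OF i(1)] by blast
    then show False using i nW by auto
  qed
  have Ri: "(x,y) \<in> R i \<longleftrightarrow> x \<in> X \<and> y \<in> X \<and> \<not>(\<exists>C\<in>Cs. x \<in> C \<and> y \<in> C)" for x y
  proof
    assume a: "(x,y) \<in> R i"
    have "x \<in> X \<and> y \<in> X" using a Rsub[OF i(1)] by blast
    moreover have "(x,y) \<notin> W" using a RiW by blast
    ultimately show "x \<in> X \<and> y \<in> X \<and> \<not>(\<exists>C\<in>Cs. x \<in> C \<and> y \<in> C)" unfolding W_def by simp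
  next
    assume a: "x \<in> X \<and> y \<in> X \<and> \<not>(\<exists>C\<in>Cs. x \<in> C \<and> y \<in> C)"
    have aX: "x \<in> X" "y \<in> X" using a by simp_all
    have nC: "\<not>(\<exists>C\<in>Cs. x \<in> C \<and> y \<in> C)" using a by simp
    have nw: "(x,y) \<notin> W" unfolding W_def using nC by simp
    obtain l where l: "l \<le> 4" "(x,y) \<in> R l" using cover[OF aX] by blast
    have "l \<noteq> 0"
    proof
      assume "l = 0"
      then have "(x,y) \<in> R 0" using l(2) by simp
      then show False using nw R0W by blast
    qed
    moreover have "l \<noteq> 3"
    proof
      assume "l = 3"
      then have "(x,y) \<in> R 3" using l(2) by simp
      then show False using nw R3W by blast
    qed
    moreover have "l \<noteq> 4"
    proof
      assume "l = 4"
      then have "(x,y) \<in> R 4" using l(2) by simp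
      then show False using nw R4W by blast
    qed
    moreover have "l \<noteq> j"
    proof
      assume "l = j"
      then have "(x,y) \<in> R j" using l(2) by simp
      then show False using nw RjW by blast
    qed
    ultimately have l12: "l = 1 \<or> l = 2" "l \<noteq> j" using l(1) by arith+
    have "i = 1 \<or> i = 2" "j = 1 \<or> j = 2" using i12 j12 by simp_all
    then have "l = i" using l12 i_ne(4) by presburger
    then show "(x,y) \<in> R i" using l by simp
  qed
  have NS: "\<exists>x y z. (\<exists>C\<in>Cs. x\<in>C \<and> y\<in>C \<and> z\<in>C) \<and> x \<noteq> y \<and> (x,y) \<notin> R 3 \<union> R 4 \<and> (x,z) \<in> R 3 \<union> R 4"
  proof -
    have val: "\<And>x. x \<in> C1 \<Longrightarrow> card {y\<in>C1. (x,y) \<in> E \<inter> C1 \<times> C1} = k"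
      and ne: "E \<inter> C1 \<times> C1 \<noteq> {}" and finC1: "finite C1" using srg unfolding srg_valency_def by blast+
    obtain a b where ab: "(a,b) \<in> E \<inter> C1 \<times> C1" using ne by auto
    have "b \<in> {y\<in>C1. (a,y) \<in> E \<inter> C1 \<times> C1}" using ab by auto
    moreover have "finite {y\<in>C1. (a,y) \<in> E \<inter> C1 \<times> C1}" using finC1 by simp
    ultimately have "card {y\<in>C1. (a,y) \<in> E \<inter> C1 \<times> C1} \<noteq> 0" by (simp add: card_eq_0_iff) blast
    moreover have "a \<in> C1" using ab by blast
    ultimately have "k \<noteq> 0" using val by simp
    then have "card {y\<in>C1. (x0,y) \<in> E \<inter> C1 \<times> C1} \<noteq> 0" using val[OF xy0(1)] by simp
    then have "{y\<in>C1. (x0,y) \<in> E \<inter> C1 \<times> C1} \<noteq> {}" by (metis card.empty)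
    then obtain z where z: "z \<in> C1" "(x0,z) \<in> E" by auto
    show ?thesis using xy0 z C12(1) unfolding E_def by blast
  qed
  have Cscard: "\<And>C. C \<in> Cs \<Longrightarrow> card C = w" using comps by blast
  have Cs2: "2 \<le> card Cs" using N by simp
  have ij: "i \<in> {1,2}" "j \<in> {1,2}" "i \<noteq> j" using i12 j12 i_ne by auto
  interpret pf X R P Cs i j w
    by (rule pf.intro[OF finX Rne Rsub cover disj R0 sym1 sym2 tr34 Pdef ij Ri R3C CsU Csne Csdisj Cscard Cs2 NS])
  show ?thesis using card_EM i12 by auto
qed

end
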